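(* Let $k$ be an algebraically closed field of characteristic zero, $n\ge1$, $q\in k$ a primitive $2n$-th root of unity, $a\in k\setminus\{0\}$. Let $\mathfrak wH_{4n}$ be the weak Hopf algebra generated by $Z,X$ with $Z^{2n+1}=Z$, $ZX=qXZ$, $X^2=0$, $\Delta(Z)=Z\otimes Z+a(1-q^{-2})Z^{n+1}X\otimes ZX$, $\Delta(X)=X\otimes 1+Z^n\otimes X$, $\epsilon(Z)=1$, $\epsilon(X)=0$, $T(Z)=Z^{2n-1}$, $T(X)=-Z^nX$. Let $H_{4n}$ be the Hopf algebra generated by $z,x$ with $z^{2n}=1$, $zx=qxz$, $x^2=0$, $\Delta(z)=z\otimes z+a(1-q^{-2})z^{n+1}x\otimes zx$, $\Delta(x)=x\otimes 1+z^n\otimes x$, $\epsilon(z)=1$, $\epsilon(x)=0$, $S(z)=z^{-1}$, $S(x)=-z^nx$. Let $J=Z^{2n}$, $\mathfrak w_1=\mathfrak wH_{4n}J$ and $\mathfrak w_2=\mathfrak wH_{4n}(1-J)$. Then $\mathfrak wH_{4n}=\mathfrak w_1\oplus\mathfrak w_2$ as a direct sum of two-sided ideals; moreover $\mathfrak w_1$ (with unit $J$, and with the comultiplication and counit restricted from $\mathfrak wH_{4n}$ and antipode $Z\mapsto Z^{2n-1}$, $XJ\mapsto -Z^nXJ$) is isomorphic to $H_{4n}$ as Hopf algebras, and $\mathfrak w_2\cong k[y]/(y^2)$ as algebras. *)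

theory Defs
  imports "HOL-Computational_Algebra.Polynomial"
begin

text \<open>An element of the free k-algebra on the two generators True (Z resp. z) and
False (X resp. x) is a finitely supported function from words to k.
Quotient algebras are handled via representatives modulo a two-sided ideal.\<close>

type_synonym 'k fa = "bool list \<Rightarrow> 'k"
type_synonym 'k fa2 = "bool list \<times> bool list \<Rightarrow> 'k"

definition fsupp :: "('a \<Rightarrow> 'k::zero) \<Rightarrow> bool" where
  "fsupp f \<longleftrightarrow> finite {w. f w \<noteq> 0}"

definition FA :: "'k::zero fa set" where
  "FA = {f. fsupp f}"

definition fa_zero :: "'k::zero fa" where "fa_zero = (\<lambda>_. 0)"
definition fa_add :: "'k::plus fa \<Rightarrow> 'k fa \<Rightarrow> 'k fa" where
  "fa_add f g = (\<lambda>w. f w + g w)"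
definition fa_diff :: "'k::minus fa \<Rightarrow> 'k fa \<Rightarrow> 'k fa" where
  "fa_diff f g = (\<lambda>w. f w - g w)"
definition fa_smult :: "'k::times \<Rightarrow> 'k fa \<Rightarrow> 'k fa" where
  "fa_smult c f = (\<lambda>w. c * f w)"
definition fa_word :: "bool list \<Rightarrow> 'k::{zero,one} fa" where
  "fa_word u = (\<lambda>w. if w = u then 1 else 0)"
definition fa_one :: "'k::{zero,one} fa" where
  "fa_one = fa_word []"
definition fa_mult :: "'k::comm_ring_1 fa \<Rightarrow> 'k fa \<Rightarrow> 'k fa" where
  "fa_mult f g = (\<lambda>w. \<Sum>i\<le>length w. f (take i w) * g (drop i w))"
definition fa_pow :: "'k::comm_ring_1 fa \<Rightarrow> nat \<Rightarrow> 'k fa" where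
  "fa_pow f m = ((fa_mult f) ^^ m) fa_one"

inductive_set fa_ideal :: "'k::comm_ring_1 fa set \<Rightarrow> 'k fa set" for R where
  zero: "fa_zero \<in> fa_ideal R"
| gen: "r \<in> R \<Longrightarrow> u \<in> FA \<Longrightarrow> v \<in> FA \<Longrightarrow> fa_mult (fa_mult u r) v \<in> fa_ideal R"
| add: "f \<in> fa_ideal R \<Longrightarrow> g \<in> fa_ideal R \<Longrightarrow> fa_add f g \<in> fa_ideal R"

definition fa2_zero :: "'k::zero fa2" where "fa2_zero = (\<lambda>_. 0)"
definition fa2_add :: "'k::plus fa2 \<Rightarrow> 'k fa2 \<Rightarrow> 'k fa2" where
  "fa2_add s t = (\<lambda>p. s p + t p)"
definition fa2_diff :: "'k::minus fa2 \<Rightarrow> 'k fa2 \<Rightarrow> 'k fa2" where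
  "fa2_diff s t = (\<lambda>p. s p - t p)"
definition fa2_smult :: "'k::times \<Rightarrow> 'k fa2 \<Rightarrow> 'k fa2" where
  "fa2_smult c s = (\<lambda>p. c * s p)"
definition fa2_one :: "'k::{zero,one} fa2" where
  "fa2_one = (\<lambda>p. if p = ([], []) then 1 else 0)"
definition fa2_mult :: "'k::comm_ring_1 fa2 \<Rightarrow> 'k fa2 \<Rightarrow> 'k fa2" where
  "fa2_mult s t = (\<lambda>(u, v). \<Sum>i\<le>length u. \<Sum>j\<le>length v.
      s (take i u, take j v) * t (drop i u, drop j v))"

definition ftens :: "'k::times fa \<Rightarrow> 'k fa \<Rightarrow> 'k fa2" where
  "ftens f g = (\<lambda>(u, v). f u * g v)"

text \<open>The subspace I \<otimes> F + F \<otimes> I of F \<otimes> F; (F/I) \<otimes> (F/I) = (F \<otimes> F)/(I \<otimes> F + F \<otimes> I).\<close>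
inductive_set tens_ideal :: "'k::comm_ring_1 fa set \<Rightarrow> 'k fa2 set" for I where
  zero: "fa2_zero \<in> tens_ideal I"
| left: "r \<in> I \<Longrightarrow> g \<in> FA \<Longrightarrow> ftens r g \<in> tens_ideal I"
| right: "r \<in> I \<Longrightarrow> g \<in> FA \<Longrightarrow> ftens g r \<in> tens_ideal I"
| add: "s \<in> tens_ideal I \<Longrightarrow> t \<in> tens_ideal I \<Longrightarrow> fa2_add s t \<in> tens_ideal I"

definition lin_ext :: "(bool list \<Rightarrow> 'b \<Rightarrow> 'k::comm_ring_1) \<Rightarrow> 'k fa \<Rightarrow> ('b \<Rightarrow> 'k)" where
  "lin_ext \<phi> f = (\<lambda>b. \<Sum>w\<in>{w. f w \<noteq> 0}. f w * \<phi> w b)"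

definition lin_ext_k :: "(bool list \<Rightarrow> 'k::comm_ring_1) \<Rightarrow> 'k fa \<Rightarrow> 'k" where
  "lin_ext_k e f = (\<Sum>w\<in>{w. f w \<noteq> 0}. f w * e w)"

definition lin_ext_poly :: "(bool list \<Rightarrow> 'k::comm_ring_1 poly) \<Rightarrow> 'k fa \<Rightarrow> 'k poly" where
  "lin_ext_poly \<chi> f = (\<Sum>w\<in>{w. f w \<noteq> 0}. smult (f w) (\<chi> w))"

definition hom_word :: "('b \<Rightarrow> 'b \<Rightarrow> 'b) \<Rightarrow> 'b \<Rightarrow> (bool \<Rightarrow> 'b) \<Rightarrow> bool list \<Rightarrow> 'b" where
  "hom_word mul one h w = foldr (\<lambda>c acc. mul (h c) acc) w one"

definition tens_map :: "(bool list \<Rightarrow> 'k::comm_ring_1 fa) \<Rightarrow> 'k fa2 \<Rightarrow> 'k fa2" where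
  "tens_map \<psi> t = (\<lambda>p. \<Sum>uv\<in>{uv. t uv \<noteq> 0}. t uv * ftens (\<psi> (fst uv)) (\<psi> (snd uv)) p)"

definition Zg :: "'k::{zero,one} fa" where "Zg = fa_word [True]"
definition Xg :: "'k::{zero,one} fa" where "Xg = fa_word [False]"

definition wH_rels :: "nat \<Rightarrow> 'k::comm_ring_1 \<Rightarrow> 'k fa set" where
  "wH_rels n q = {fa_diff (fa_pow Zg (2*n+1)) Zg,
                  fa_diff (fa_mult Zg Xg) (fa_smult q (fa_mult Xg Zg)),
                  fa_mult Xg Xg}"

definition H_rels :: "nat \<Rightarrow> 'k::comm_ring_1 \<Rightarrow> 'k fa set" where
  "H_rels n q = {fa_diff (fa_pow Zg (2*n)) fa_one,
                 fa_diff (fa_mult Zg Xg) (fa_smult q (fa_mult Xg Zg)),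
                 fa_mult Xg Xg}"

text \<open>Comultiplication on generators (same formulas for both algebras):
  Delta(Z) = Z\<otimes>Z + a(1-q^{-2}) Z^{n+1}X \<otimes> ZX,  Delta(X) = X \<otimes> 1 + Z^n \<otimes> X.\<close>
definition comult_gen :: "nat \<Rightarrow> 'k::field \<Rightarrow> 'k \<Rightarrow> bool \<Rightarrow> 'k fa2" where
  "comult_gen n q a c =
     (if c then fa2_add (ftens Zg Zg)
                  (fa2_smult (a * (1 - inverse (q^2)))
                     (ftens (fa_mult (fa_pow Zg (n+1)) Xg) (fa_mult Zg Xg)))
      else fa2_add (ftens Xg fa_one) (ftens (fa_pow Zg n) Xg))"

definition comult :: "nat \<Rightarrow> 'k::field \<Rightarrow> 'k \<Rightarrow> 'k fa \<Rightarrow> 'k fa2" where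
  "comult n q a = lin_ext (hom_word fa2_mult fa2_one (comult_gen n q a))"

definition counit :: "'k::comm_ring_1 fa \<Rightarrow> 'k" where
  "counit = lin_ext_k (hom_word (*) 1 (\<lambda>c. if c then 1 else 0))"

text \<open>Antipode of H_{4n}: S(z) = z^{-1} = z^{2n-1}, S(x) = -z^n x, extended as an
  anti-algebra map (words are reversed).\<close>
definition antipode_H :: "nat \<Rightarrow> 'k::comm_ring_1 fa \<Rightarrow> 'k fa" where
  "antipode_H n = lin_ext (\<lambda>w. hom_word fa_mult fa_one
      (\<lambda>c. if c then fa_pow Zg (2*n-1) else fa_smult (-1) (fa_mult (fa_pow Zg n) Xg)) (rev w))"

definition Jg :: "nat \<Rightarrow> 'k::comm_ring_1 fa" where
  "Jg n = fa_pow Zg (2*n)"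

text \<open>Antipode of w_1 (unit J): anti-algebra map with Z \<mapsto> Z^{2n-1}, X \<mapsto> -Z^n X J
  (so XJ \<mapsto> -Z^n X J), unit \<mapsto> J.\<close>
definition antipode_w1 :: "nat \<Rightarrow> 'k::comm_ring_1 fa \<Rightarrow> 'k fa" where
  "antipode_w1 n = lin_ext (\<lambda>w. hom_word fa_mult (Jg n)
      (\<lambda>c. if c then fa_pow Zg (2*n-1)
           else fa_smult (-1) (fa_mult (fa_mult (fa_pow Zg n) Xg) (Jg n))) (rev w))"

text \<open>Principal ideals w_1 = wH J and w_2 = wH (1 - J), as sets of representatives
  (saturated modulo the ideal I).\<close>
definition w_part :: "'k::comm_ring_1 fa set \<Rightarrow> 'k fa \<Rightarrow> 'k fa set" where
  "w_part I e = {f \<in> FA. \<exists>g\<in>FA. fa_diff f (fa_mult g e) \<in> I}"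

definition sum_tens :: "('k::comm_ring_1 fa \<times> 'k fa) list \<Rightarrow> 'k fa2" where
  "sum_tens ps = foldr fa2_add (map (\<lambda>(g, h). ftens g h) ps) fa2_zero"

definition primitive_root :: "'k::comm_ring_1 \<Rightarrow> nat \<Rightarrow> bool" where
  "primitive_root q m \<longleftrightarrow> q ^ m = 1 \<and> (\<forall>j. 0 < j \<and> j < m \<longrightarrow> q ^ j \<noteq> 1)"

definition alg_closed :: "'k::field itself \<Rightarrow> bool" where
  "alg_closed _ \<longleftrightarrow> (\<forall>p::'k poly. degree p \<noteq> 0 \<longrightarrow> (\<exists>x. poly p x = 0))"

end

theory Submission
  imports Defs "HOL-Computational_Algebra.Polynomial"
begin


section \<open>Basic facts on the free algebra\<close>

abbreviation supp :: "('a \<Rightarrow> 'k::zero) \<Rightarrow> 'a set" where "supp f \<equiv> {w. f w \<noteq> 0}"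

lemma FA_iff: "f \<in> FA \<longleftrightarrow> finite (supp f)" by (simp add: FA_def fsupp_def)

lemma FA_zero[simp]: "fa_zero \<in> FA" by (simp add: FA_iff fa_zero_def)
lemma FA_word[simp]: "fa_word u \<in> FA"
  by (auto simp: FA_iff fa_word_def intro: finite_subset[of _ "{u}"])
lemma FA_one[simp]: "fa_one \<in> FA" by (simp add: fa_one_def)
lemma FA_add[simp]: fixes f g :: "'k::comm_ring_1 fa" shows "f \<in> FA \<Longrightarrow> g \<in> FA \<Longrightarrow> fa_add f g \<in> FA"
  unfolding FA_iff fa_add_def by (rule finite_subset[of _ "supp f \<union> supp g"]) auto
lemma FA_diff[simp]: fixes f g :: "'k::comm_ring_1 fa" shows "f \<in> FA \<Longrightarrow> g \<in> FA \<Longrightarrow> fa_diff f g \<in> FA"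
  unfolding FA_iff fa_diff_def by (rule finite_subset[of _ "supp f \<union> supp g"]) auto
lemma FA_smult[simp]: fixes f :: "'k::comm_ring_1 fa" shows "f \<in> FA \<Longrightarrow> fa_smult c f \<in> FA"
  unfolding FA_iff fa_smult_def by (rule finite_subset[of _ "supp f"]) auto

lemma fa_mult_nz:
  fixes f g :: "'k::comm_ring_1 fa" assumes "fa_mult f g w \<noteq> 0"
  shows "\<exists>i\<le>length w. f (take i w) \<noteq> 0 \<and> g (drop i w) \<noteq> 0"
proof (rule ccontr)
  assume "\<not> ?thesis"
  hence "fa_mult f g w = 0" unfolding fa_mult_def by (intro sum.neutral) auto
  thus False using assms by simp
qed

lemma FA_mult[simp]:
  fixes f g :: "'k::comm_ring_1 fa" assumes "f \<in> FA" "g \<in> FA" shows "fa_mult f g \<in> FA"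
proof -
  have S: "supp (fa_mult f g) \<subseteq> (\<lambda>(u,v). u @ v) ` (supp f \<times> supp g)"
  proof
    fix w assume "w \<in> supp (fa_mult f g)"
    then obtain i where "f (take i w) \<noteq> 0" "g (drop i w) \<noteq> 0" using fa_mult_nz by blast
    thus "w \<in> (\<lambda>(u,v). u @ v) ` (supp f \<times> supp g)"
      by (intro image_eqI[of _ _ "(take i w, drop i w)"]) auto
  qed
  thus ?thesis using assms unfolding FA_iff by (intro finite_subset[OF S] finite_imageI finite_cartesian_product)
qed

lemma mult_add_left: "fa_mult (fa_add f g) h = fa_add (fa_mult f h) (fa_mult g h)"
  by (simp add: fa_mult_def fa_add_def distrib_right sum.distrib)
lemma mult_add_right: "fa_mult h (fa_add f g) = fa_add (fa_mult h f) (fa_mult h g)"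
  by (simp add: fa_mult_def fa_add_def distrib_left sum.distrib)
lemma mult_diff_left: "fa_mult (fa_diff f g) h = fa_diff (fa_mult f h) (fa_mult g h)"
  by (simp add: fa_mult_def fa_diff_def left_diff_distrib sum_subtractf)
lemma mult_diff_right: "fa_mult h (fa_diff f g) = fa_diff (fa_mult h f) (fa_mult h g)"
  by (simp add: fa_mult_def fa_diff_def right_diff_distrib sum_subtractf)
lemma mult_smult_left: "fa_mult (fa_smult c f) h = fa_smult c (fa_mult f h)"
  by (simp add: fa_mult_def fa_smult_def sum_distrib_left mult.assoc)
lemma mult_smult_right: "fa_mult h (fa_smult c f) = fa_smult c (fa_mult h f)"
  by (simp add: fa_mult_def fa_smult_def sum_distrib_left mult.left_commute)
lemma mult_zero_left[simp]: "fa_mult fa_zero h = fa_zero"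
  by (simp add: fa_mult_def fa_zero_def)
lemma mult_zero_right[simp]: "fa_mult h fa_zero = fa_zero"
  by (simp add: fa_mult_def fa_zero_def)

lemma sum_delta_nat: "k \<le> (N::nat) \<Longrightarrow> (\<Sum>i\<le>N. if i = k then a else 0) = (a::'a::comm_monoid_add)"
  by simp

lemma mult_word_term:
  assumes i: "i \<le> length w"
  shows "(if take i w = u then 1 else 0) * (if drop i w = v then 1 else 0) =
          (if i = length u then (if w = u @ v then 1 else 0) else (0::'k::comm_ring_1))"
proof (cases "take i w = u \<and> drop i w = v")
  case True
  hence "w = u @ v" by (metis append_take_drop_id)
  moreover have "i = length u" using True i by auto
  ultimately show ?thesis using True by simp
next
  case False
  have "\<not> (i = length u \<and> w = u @ v)"
  proof
    assume "i = length u \<and> w = u @ v"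
    thus False using False by simp
  qed
  thus ?thesis using False by auto
qed

lemma mult_word[simp]: "fa_mult (fa_word u) (fa_word v) = (fa_word (u @ v) :: 'k::comm_ring_1 fa)"
proof
  fix w :: "bool list"
  have "fa_mult (fa_word u) (fa_word v) w =
        (\<Sum>i\<le>length w. if i = length u then (if w = u @ v then 1 else 0) else (0::'k))"
    unfolding fa_mult_def fa_word_def
    by (intro sum.cong refl mult_word_term) simp
  also have "\<dots> = (fa_word (u @ v) :: 'k fa) w"
  proof (cases "length u \<le> length w")
    case True thus ?thesis by (simp add: fa_word_def sum_delta_nat)
  next
    case False
    hence "w \<noteq> u @ v" by auto
    thus ?thesis by (simp add: fa_word_def)
  qed
  finally show "fa_mult (fa_word u) (fa_word v) w = (fa_word (u @ v) :: 'k fa) w" .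
qed

lemma mult_one_left[simp]: fixes f :: "'k::comm_ring_1 fa" shows "fa_mult fa_one f = f"
proof
  fix w
  have "fa_mult fa_one f w = (\<Sum>i\<le>length w. if i = 0 then f w else 0)"
    unfolding fa_mult_def fa_one_def fa_word_def
  proof (intro sum.cong refl)
    fix i assume "i \<in> {..length w}"
    thus "(if take i w = [] then 1 else 0) * f (drop i w) = (if i = 0 then f w else 0)"
      by (cases "i = 0") auto
  qed
  thus "fa_mult fa_one f w = f w" by (simp add: sum_delta_nat)
qed

lemma mult_one_right[simp]: fixes f :: "'k::comm_ring_1 fa" shows "fa_mult f fa_one = f"
proof
  fix w
  have "fa_mult f fa_one w = (\<Sum>i\<le>length w. if i = length w then f w else 0)"
    unfolding fa_mult_def fa_one_def fa_word_def
  proof (intro sum.cong refl)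
    fix i assume "i \<in> {..length w}"
    thus "f (take i w) * (if drop i w = [] then 1 else 0) = (if i = length w then f w else 0)"
      by (cases "i = length w") simp_all
  qed
  thus "fa_mult f fa_one w = f w" by (simp add: sum_delta_nat)
qed

lemma mult_assoc: fixes f g h :: "'k::comm_ring_1 fa" shows "fa_mult (fa_mult f g) h = fa_mult f (fa_mult g h)"
proof
  fix w :: "bool list"
  let ?N = "length w"
  let ?F = "\<lambda>j i. f (take j w) * g (drop j (take i w)) * h (drop i w)"
  have "fa_mult (fa_mult f g) h w = (\<Sum>i\<le>?N. \<Sum>j\<in>{j\<in>{..?N}. j \<le> i}. ?F j i)"
    unfolding fa_mult_def
  proof (intro sum.cong refl)
    fix i assume "i \<in> {..?N}"
    hence e: "{j\<in>{..?N}. j \<le> i} = {..i}" "length (take i w) = i" by auto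
    show "(\<Sum>ia\<le>length (take i w). f (take ia (take i w)) * g (drop ia (take i w))) * h (drop i w) =
         (\<Sum>j\<in>{j\<in>{..?N}. j \<le> i}. ?F j i)"
      unfolding e sum_distrib_right using e(2) by (intro sum.cong refl) (simp add: min_def)
  qed
  also have "\<dots> = (\<Sum>j\<le>?N. \<Sum>i\<in>{i\<in>{..?N}. j \<le> i}. ?F j i)"
    by (rule sum.swap_restrict) auto
  also have "\<dots> = (\<Sum>j\<le>?N. f (take j w) * (\<Sum>k\<le>?N - j. g (take k (drop j w)) * h (drop k (drop j w))))"
  proof (intro sum.cong refl)
    fix j assume j: "j \<in> {..?N}"
    have e: "{i\<in>{..?N}. j \<le> i} = {0 + j..(?N - j) + j}" using j by auto
    show "(\<Sum>i\<in>{i\<in>{..?N}. j \<le> i}. ?F j i) =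
      f (take j w) * (\<Sum>k\<le>?N - j. g (take k (drop j w)) * h (drop k (drop j w)))"
      unfolding e sum.shift_bounds_cl_nat_ivl sum_distrib_left atLeast0AtMost
      by (intro sum.cong refl) (simp add: take_drop mult.assoc add.commute)
  qed
  also have "\<dots> = fa_mult f (fa_mult g h) w"
    unfolding fa_mult_def by simp
  finally show "fa_mult (fa_mult f g) h w = fa_mult f (fa_mult g h) w" .
qed


section \<open>Induction over finitely supported elements\<close>

lemma restr_insert:
  fixes f :: "'k::comm_ring_1 fa"
  assumes "a \<notin> F"
  shows "(\<lambda>w. if w \<in> insert a F then f w else 0) =
         fa_add (\<lambda>w. if w \<in> F then f w else 0) (fa_smult (f a) (fa_word a))"
  using assms by (auto simp: fa_add_def fa_smult_def fa_word_def)

lemma restr_FA: "finite F \<Longrightarrow> (\<lambda>w. if w \<in> F then (f w::'k::comm_ring_1) else 0) \<in> FA"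
  unfolding FA_iff by (rule finite_subset[of _ F]) auto

lemma fa_induct[consumes 1, case_names zero step]:
  fixes f :: "'k::comm_ring_1 fa"
  assumes f: "f \<in> FA" and z: "P fa_zero"
    and st: "\<And>h c u. h \<in> FA \<Longrightarrow> P h \<Longrightarrow> f u \<noteq> 0 \<Longrightarrow> P (fa_add h (fa_smult c (fa_word u)))"
  shows "P f"
proof -
  have fin: "finite (supp f)" using f by (simp add: FA_iff)
  have "P (\<lambda>w. if w \<in> F then f w else 0)" if "finite F" "F \<subseteq> supp f" for F
    using that
  proof (induction rule: finite_subset_induct)
    case empty
    have "(\<lambda>w. if w \<in> {} then f w else 0) = fa_zero" by (simp add: fa_zero_def)
    thus ?case using z by simp
  next
    case (insert a F)
    show ?case unfolding restr_insert[OF insert(3)]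
      by (rule st) (use insert restr_FA in auto)
  qed
  from this[OF fin] have "P (\<lambda>w. if w \<in> supp f then f w else 0)" by simp
  moreover have "(\<lambda>w. if w \<in> supp f then f w else 0) = f" by auto
  ultimately show ?thesis by simp
qed

lemma fa_pt:
  "fa_add f g w = f w + g w" "fa_diff f g w = f w - g w" "fa_smult c f w = c * f w"
  "fa_zero w = 0"
  by (simp_all add: fa_add_def fa_diff_def fa_smult_def fa_zero_def)

lemma fa_ext: "(\<And>w. f w = g w) \<Longrightarrow> f = g" by auto

lemmas fa_alg = mult_add_left mult_add_right mult_smult_left mult_smult_right
  mult_diff_left mult_diff_right mult_word

lemma smult_smult[simp]: "fa_smult c (fa_smult d f) = fa_smult (c * d) (f::'k::comm_ring_1 fa)"
  by (simp add: fa_smult_def mult.assoc)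
lemma smult_one[simp]: "fa_smult 1 (f::'k::comm_ring_1 fa) = f"
  by (simp add: fa_smult_def)
lemma diff_self[simp]: "fa_diff f f = (fa_zero::'k::comm_ring_1 fa)"
  by (simp add: fa_diff_def fa_zero_def)
lemma diff_zero[simp]: "fa_diff f fa_zero = (f::'k::comm_ring_1 fa)"
  by (simp add: fa_diff_def fa_zero_def)
lemma add_zero[simp]: "fa_add f fa_zero = (f::'k::comm_ring_1 fa)" "fa_add fa_zero f = f"
  by (simp_all add: fa_add_def fa_zero_def)
lemma smult_zero[simp]: "fa_smult c fa_zero = (fa_zero::'k::comm_ring_1 fa)"
  by (simp add: fa_smult_def fa_zero_def)

lemma Zg_word: "Zg = fa_word [True]" by (simp add: Zg_def)
lemma Xg_word: "Xg = fa_word [False]" by (simp add: Xg_def)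
lemma one_word: "fa_one = fa_word []" by (simp add: fa_one_def)
lemma pow_Zg: "fa_pow Zg m = (fa_word (replicate m True) :: 'k::comm_ring_1 fa)"
  by (induction m) (simp_all add: fa_pow_def one_word Zg_word)
lemma Jg_word: "Jg n = (fa_word (replicate (2*n) True) :: 'k::comm_ring_1 fa)"
  by (simp add: Jg_def pow_Zg)

section \<open>Ideals\<close>

locale fid =
  fixes R :: "'k::comm_ring_1 fa set"
  assumes R: "R \<subseteq> FA"
begin

abbreviation "I \<equiv> fa_ideal R"

lemma I_FA: "x \<in> I \<Longrightarrow> x \<in> FA"
  by (induction rule: fa_ideal.induct) (use R in auto)

lemma I_gen: "r \<in> R \<Longrightarrow> r \<in> I"
  using fa_ideal.gen[of r R fa_one fa_one] by simp

lemma I_mult_left: "x \<in> I \<Longrightarrow> g \<in> FA \<Longrightarrow> fa_mult g x \<in> I"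
proof (induction rule: fa_ideal.induct)
  case zero thus ?case by (simp add: fa_ideal.zero)
next
  case (gen r u v)
  thus ?case using fa_ideal.gen[of r R "fa_mult g u" v] by (simp add: mult_assoc)
next
  case (add f h) thus ?case by (simp add: mult_add_right fa_ideal.add)
qed

lemma I_mult_right: "x \<in> I \<Longrightarrow> g \<in> FA \<Longrightarrow> fa_mult x g \<in> I"
proof (induction rule: fa_ideal.induct)
  case zero thus ?case by (simp add: fa_ideal.zero)
next
  case (gen r u v)
  thus ?case using fa_ideal.gen[of r R u "fa_mult v g"] by (simp add: mult_assoc)
next
  case (add f h) thus ?case by (simp add: mult_add_left fa_ideal.add)
qed

lemma I_smult: "x \<in> I \<Longrightarrow> fa_smult c x \<in> I"
proof (induction rule: fa_ideal.induct)
  case zero thus ?case by (simp add: fa_ideal.zero)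
next
  case (gen r u v)
  thus ?case using fa_ideal.gen[of r R "fa_smult c u" v] by (simp add: mult_smult_left)
next
  case (add f h)
  have "fa_smult c (fa_add f h) = fa_add (fa_smult c f) (fa_smult c h)"
    by (simp add: fa_smult_def fa_add_def distrib_left)
  thus ?case using add by (simp add: fa_ideal.add)
qed

lemma I_add: "x \<in> I \<Longrightarrow> y \<in> I \<Longrightarrow> fa_add x y \<in> I" by (rule fa_ideal.add)
lemma I_zero: "fa_zero \<in> I" by (rule fa_ideal.zero)

lemma I_diff: "x \<in> I \<Longrightarrow> y \<in> I \<Longrightarrow> fa_diff x y \<in> I"
proof -
  assume "x \<in> I" "y \<in> I"
  moreover have "fa_diff x y = fa_add x (fa_smult (-1) y)"
    by (simp add: fa_diff_def fa_add_def fa_smult_def)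
  ultimately show ?thesis by (simp add: I_add I_smult)
qed

lemma I_sum: "finite S \<Longrightarrow> (\<And>w. w \<in> S \<Longrightarrow> \<phi> w \<in> I) \<Longrightarrow>
  (\<lambda>b. \<Sum>w\<in>S. c w * \<phi> w b) \<in> I"
proof (induction rule: finite_induct)
  case empty
  have "(\<lambda>b. \<Sum>w\<in>{}. c w * \<phi> w b) = fa_zero" by (simp add: fa_zero_def)
  thus ?case by (simp add: I_zero)
next
  case (insert a F)
  have "(\<lambda>b. \<Sum>w\<in>insert a F. c w * \<phi> w b) =
        fa_add (fa_smult (c a) (\<phi> a)) (\<lambda>b. \<Sum>w\<in>F. c w * \<phi> w b)"
    using insert by (simp add: fa_add_def fa_smult_def)
  thus ?case using insert by (simp add: I_add I_smult)
qed

definition cg :: "'k fa \<Rightarrow> 'k fa \<Rightarrow> bool" where "cg f g \<longleftrightarrow> fa_diff f g \<in> I"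

lemma cg_refl: "cg f f" by (simp add: cg_def I_zero)
lemma cg_sym: "cg f g \<Longrightarrow> cg g f"
proof -
  assume "cg f g"
  moreover have "fa_diff g f = fa_smult (-1) (fa_diff f g)" by (simp add: fa_diff_def fa_smult_def)
  ultimately show ?thesis by (simp add: cg_def I_smult)
qed
lemma cg_trans[trans]: "cg f g \<Longrightarrow> cg g h \<Longrightarrow> cg f h"
proof -
  assume "cg f g" "cg g h"
  moreover have "fa_diff f h = fa_add (fa_diff f g) (fa_diff g h)" by (simp add: fa_diff_def fa_add_def)
  ultimately show ?thesis by (simp add: cg_def I_add)
qed
lemma cg_add: "cg f f' \<Longrightarrow> cg g g' \<Longrightarrow> cg (fa_add f g) (fa_add f' g')"
proof -
  assume "cg f f'" "cg g g'"
  moreover have "fa_diff (fa_add f g) (fa_add f' g') = fa_add (fa_diff f f') (fa_diff g g')"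
    by (simp add: fa_diff_def fa_add_def algebra_simps)
  ultimately show ?thesis by (simp add: cg_def I_add)
qed
lemma cg_diff: "cg f f' \<Longrightarrow> cg g g' \<Longrightarrow> cg (fa_diff f g) (fa_diff f' g')"
proof -
  assume "cg f f'" "cg g g'"
  moreover have "fa_diff (fa_diff f g) (fa_diff f' g') = fa_diff (fa_diff f f') (fa_diff g g')"
    by (simp add: fa_diff_def algebra_simps)
  ultimately show ?thesis by (simp add: cg_def I_diff)
qed
lemma cg_smult: "cg f f' \<Longrightarrow> cg (fa_smult c f) (fa_smult c f')"
proof -
  assume "cg f f'"
  moreover have "fa_diff (fa_smult c f) (fa_smult c f') = fa_smult c (fa_diff f f')"
    by (simp add: fa_diff_def fa_smult_def right_diff_distrib)
  ultimately show ?thesis by (simp add: cg_def I_smult)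
qed
lemma cg_mult_left: "cg f f' \<Longrightarrow> h \<in> FA \<Longrightarrow> cg (fa_mult h f) (fa_mult h f')"
  by (simp add: cg_def I_mult_left flip: mult_diff_right)
lemma cg_mult_right: "cg f f' \<Longrightarrow> h \<in> FA \<Longrightarrow> cg (fa_mult f h) (fa_mult f' h)"
  by (simp add: cg_def I_mult_right flip: mult_diff_left)
lemma cg_mult: "cg f f' \<Longrightarrow> cg g g' \<Longrightarrow> f \<in> FA \<Longrightarrow> g' \<in> FA \<Longrightarrow>
   cg (fa_mult f g) (fa_mult f' g')"
  by (meson cg_mult_left cg_mult_right cg_trans)
lemma cg_zero_iff: "cg f fa_zero \<longleftrightarrow> f \<in> I" by (simp add: cg_def)
lemma cg_I: "cg f g \<Longrightarrow> g \<in> I \<Longrightarrow> f \<in> I"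
  by (metis cg_trans cg_zero_iff)

lemma cg_ctx:
  assumes "cg (fa_word r) (fa_smult c (fa_word s))"
  shows "cg (fa_word (a @ r @ b)) (fa_smult c (fa_word (a @ s @ b)))"
proof -
  have "cg (fa_mult (fa_mult (fa_word a) (fa_word r)) (fa_word b))
           (fa_mult (fa_mult (fa_word a) (fa_smult c (fa_word s))) (fa_word b))"
    by (intro cg_mult_right cg_mult_left assms) simp_all
  thus ?thesis by (simp add: fa_alg)
qed

end



lemma smult_zero_left[simp]: "fa_smult 0 f = (fa_zero :: 'k::comm_ring_1 fa)"
  by (simp add: fa_smult_def fa_zero_def)

lemma (in fid) cg_ctx1:
  assumes "cg (fa_word r) (fa_word s)"
  shows "cg (fa_word (a @ r @ b)) (fa_word (a @ s @ b))"
  using cg_ctx[of r 1 s a b] assms by simp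

locale wh =
  fixes n :: nat and q :: "'k::field"
  assumes n1: "n \<ge> 1" and q2n: "q ^ (2*n) = 1" and qn: "q ^ n = -1"
begin

lemma wH_rels_words: "wH_rels n q =
  {fa_diff (fa_word (replicate (2*n+1) True)) (fa_word [True]),
   fa_diff (fa_word [True, False]) (fa_smult q (fa_word [False, True])),
   fa_word [False, False]}"
  unfolding wH_rels_def pow_Zg unfolding Zg_word Xg_word by simp

lemma wH_FA: "wH_rels n q \<subseteq> FA" by (simp add: wH_rels_words)

sublocale fid "wH_rels n q" by unfold_locales (rule wH_FA)

lemma rZ: "cg (fa_word (replicate (2*n+1) True)) (fa_word [True])"
  unfolding cg_def by (rule I_gen) (simp add: wH_rels_words)
lemma rZX: "cg (fa_word [True, False]) (fa_smult q (fa_word [False, True]))"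
  unfolding cg_def by (rule I_gen) (simp add: wH_rels_words)
lemma rXX: "fa_word [False, False] \<in> I"
  by (rule I_gen) (simp add: wH_rels_words)
lemma rXX_ctx: "fa_word (a @ [False, False] @ b) \<in> I"
proof -
  have "cg (fa_word [False, False]) (fa_smult 0 (fa_word []))" using rXX by (simp add: cg_def)
  from cg_ctx[OF this, of a b] show ?thesis by (simp add: cg_def)
qed

lemma com: "cg (fa_word (replicate m True @ [False])) (fa_smult (q^m) (fa_word (False # replicate m True)))"
proof (induction m)
  case 0 show ?case by (simp add: cg_refl)
next
  case (Suc m)
  have 1: "cg (fa_word (True # replicate m True @ [False]))
              (fa_smult (q^m) (fa_word (True # False # replicate m True)))"
    using cg_ctx[OF Suc, of "[True]" "[]"] by simp
  have 2: "cg (fa_smult (q^m) (fa_word (True # False # replicate m True)))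
              (fa_smult (q^m * q) (fa_word (False # True # replicate m True)))"
    using cg_smult[OF cg_ctx[OF rZX, of "[]" "replicate m True"], of "q^m"] by simp
  from cg_trans[OF 1 2] show ?case by (simp add: mult.commute)
qed

lemma central_word: "cg (fa_word (replicate (2*n) True @ w)) (fa_word (w @ replicate (2*n) True))"
proof (induction w)
  case Nil show ?case by (simp add: cg_refl)
next
  case (Cons c w)
  show ?case
  proof (cases c)
    case True
    have "cg (fa_word ([True] @ (replicate (2*n) True @ w) @ []))
             (fa_word ([True] @ (w @ replicate (2*n) True) @ []))"
      by (rule cg_ctx1[OF Cons])
    thus ?thesis using True by (simp add: replicate_app_Cons_same)
  next
    case False
    have 1: "cg (fa_word (replicate (2*n) True @ False # w))
             (fa_word (False # replicate (2*n) True @ w))"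
      using cg_ctx[OF com[of "2*n"], of "[]" w] by (simp add: q2n)
    have 2: "cg (fa_word (False # replicate (2*n) True @ w))
             (fa_word (False # w @ replicate (2*n) True))"
      using cg_ctx1[OF Cons, of "[False]" "[]"] by simp
    from cg_trans[OF 1 2] show ?thesis using False by simp
  qed
qed

lemma absorb:
  assumes "True \<in> set u"
  shows "cg (fa_word u) (fa_word (u @ replicate (2*n) True))"
proof -
  obtain a b where u: "u = a @ True # b" using assms by (meson split_list)
  have 1: "cg (fa_word (a @ True # b @ replicate (2*n) True))
           (fa_word (a @ True # replicate (2*n) True @ b))"
    using cg_ctx1[OF cg_sym[OF central_word], of "a @ [True]" b "[]"] by simp
  have 2: "cg (fa_word (a @ True # replicate (2*n) True @ b)) (fa_word (a @ True # b))"
    using cg_ctx1[OF rZ, of a b] by simp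
  from cg_trans[OF 1 2] have "cg (fa_word (u @ replicate (2*n) True)) (fa_word u)"
    by (simp add: u)
  thus ?thesis by (rule cg_sym)
qed

abbreviation "J \<equiv> (Jg n :: 'k fa)"

lemma J_FA[simp]: "J \<in> FA" by (simp add: Jg_word)

lemma J_central: "h \<in> FA \<Longrightarrow> cg (fa_mult J h) (fa_mult h J)"
proof (induction rule: fa_induct)
  case zero show ?case by (simp add: cg_refl)
next
  case (step h c u)
  have "cg (fa_add (fa_mult J h) (fa_smult c (fa_word (replicate (2*n) True @ u))))
           (fa_add (fa_mult h J) (fa_smult c (fa_word (u @ replicate (2*n) True))))"
    by (intro cg_add cg_smult step central_word)
  thus ?case by (simp add: fa_alg Jg_word)
qed

lemma JJ: "cg (fa_mult J J) J"
proof -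
  have "True \<in> set (replicate (2*n) True)" using n1 by simp
  from cg_sym[OF absorb[OF this]] show ?thesis by (simp add: Jg_word)
qed

end



lemma lin_ext_word: "f \<in> FA \<Longrightarrow> lin_ext fa_word f = (f::'k::comm_ring_1 fa)"
proof
  fix b
  assume f: "f \<in> FA"
  have "lin_ext fa_word f b = (\<Sum>w\<in>supp f. if w = b then f w else 0)"
    unfolding lin_ext_def fa_word_def by (intro sum.cong) auto
  also have "\<dots> = f b" using f by (simp add: FA_iff)
  finally show "lin_ext fa_word f b = f b" .
qed

lemma lin_ext_FA:
  fixes f :: "'k::comm_ring_1 fa"
  assumes "f \<in> FA" "\<And>w. \<phi> w \<in> FA"
  shows "lin_ext \<phi> f \<in> FA"
proof -
  have "supp (lin_ext \<phi> f) \<subseteq> (\<Union>w\<in>supp f. supp (\<phi> w))"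
  proof
    fix b assume "b \<in> supp (lin_ext \<phi> f)"
    hence "(\<Sum>w\<in>supp f. f w * \<phi> w b) \<noteq> 0" by (simp add: lin_ext_def)
    then obtain w where "w \<in> supp f" "f w * \<phi> w b \<noteq> 0" by (meson sum.neutral)
    thus "b \<in> (\<Union>w\<in>supp f. supp (\<phi> w))" by auto
  qed
  moreover have "finite (\<Union>w\<in>supp f. supp (\<phi> w))" using assms by (auto simp: FA_iff)
  ultimately show ?thesis by (simp add: FA_iff finite_subset)
qed

lemma lin_ext_diff:
  "fa_diff (lin_ext \<phi>1 f) (lin_ext \<phi>2 f) = (\<lambda>b. \<Sum>w\<in>supp f. f w * fa_diff (\<phi>1 w) (\<phi>2 w) b)"
  by (simp add: lin_ext_def fa_diff_def right_diff_distrib sum_subtractf)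

lemma hom_word_Cons[simp]: "hom_word mul one h (c # xs) = mul (h c) (hom_word mul one h xs)"
  and hom_word_Nil[simp]: "hom_word mul one h [] = one"
  by (simp_all add: hom_word_def)

lemma hom_word_FA:
  "u \<in> FA \<Longrightarrow> (\<And>c. g c \<in> FA) \<Longrightarrow> hom_word fa_mult u g xs \<in> (FA :: 'k::comm_ring_1 fa set)"
  by (induction xs) auto

lemma (in fid) hom_word_cg:
  assumes "cg u1 u2" "\<And>c. cg (g1 c) (g2 c)" "u2 \<in> FA" "\<And>c. g1 c \<in> FA" "\<And>c. g2 c \<in> FA"
  shows "cg (hom_word fa_mult u1 g1 xs) (hom_word fa_mult u2 g2 xs)"
proof (induction xs)
  case Nil thus ?case using assms by simp
next
  case (Cons c xs)
  show ?case using Cons assms by (simp add: cg_mult hom_word_FA)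
qed

section \<open>The character chi\<close>

definition chiw :: "bool list \<Rightarrow> 'k::comm_ring_1 poly" where
  "chiw w = (if True \<in> set w then 0 else monom 1 (length w))"

lemma chiw_append: "chiw (u @ v) = chiw u * chiw v"
  by (simp add: chiw_def mult_monom)

abbreviation "Lc \<equiv> lin_ext_poly chiw"

lemma Lc_super:
  fixes f :: "'k::comm_ring_1 fa"
  assumes "finite S" "supp f \<subseteq> S"
  shows "Lc f = (\<Sum>w\<in>S. smult (f w) (chiw w))"
  unfolding lin_ext_poly_def using assms by (intro sum.mono_neutral_left) auto

lemma Lc_add: "f \<in> FA \<Longrightarrow> g \<in> FA \<Longrightarrow> Lc (fa_add f g) = Lc f + Lc (g::'k::comm_ring_1 fa)"
proof -
  assume f: "f \<in> FA" and g: "g \<in> FA"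
  let ?S = "supp f \<union> supp g"
  have fin: "finite ?S" using f g by (simp add: FA_iff)
  have "Lc (fa_add f g) = (\<Sum>w\<in>?S. smult (fa_add f g w) (chiw w))"
    by (rule Lc_super[OF fin]) (auto simp: fa_add_def)
  also have "\<dots> = (\<Sum>w\<in>?S. smult (f w) (chiw w)) + (\<Sum>w\<in>?S. smult (g w) (chiw w))"
    by (simp add: fa_add_def smult_add_left sum.distrib)
  also have "\<dots> = Lc f + Lc g"
    using Lc_super[OF fin, of f] Lc_super[OF fin, of g] by auto
  finally show ?thesis .
qed

lemma smult_sum_right: "smult c (\<Sum>i\<in>S. f i) = (\<Sum>i\<in>S. smult c (f i))"
  by (induction S rule: infinite_finite_induct) (simp_all add: smult_add_right)

lemma Lc_smult: "f \<in> FA \<Longrightarrow> Lc (fa_smult c f) = smult c (Lc (f::'k::comm_ring_1 fa))"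
proof -
  assume f: "f \<in> FA"
  have fin: "finite (supp f)" using f by (simp add: FA_iff)
  have "Lc (fa_smult c f) = (\<Sum>w\<in>supp f. smult (fa_smult c f w) (chiw w))"
    by (rule Lc_super[OF fin]) (auto simp: fa_smult_def)
  also have "\<dots> = smult c (Lc f)"
    by (simp add: fa_smult_def lin_ext_poly_def smult_sum_right)
  finally show ?thesis .
qed

lemma Lc_zero[simp]: "Lc (fa_zero :: 'k::comm_ring_1 fa) = 0"
  by (simp add: lin_ext_poly_def fa_zero_def)

lemma Lc_diff: "f \<in> FA \<Longrightarrow> g \<in> FA \<Longrightarrow> Lc (fa_diff f g) = Lc f - Lc (g::'k::comm_ring_1 fa)"
proof -
  assume f: "f \<in> FA" and g: "g \<in> FA"
  have "fa_diff f g = fa_add f (fa_smult (-1) g)" by (simp add: fa_diff_def fa_add_def fa_smult_def)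
  thus ?thesis using f g by (simp add: Lc_add Lc_smult)
qed

lemma Lc_word[simp]: "Lc (fa_word u :: 'k::comm_ring_1 fa) = chiw u"
proof -
  have "Lc (fa_word u :: 'k fa) = (\<Sum>w\<in>{u}. smult (fa_word u w) (chiw w))"
    by (rule Lc_super) (auto simp: fa_word_def)
  thus ?thesis by (simp add: fa_word_def)
qed

lemma Lc_mult_word: "g \<in> FA \<Longrightarrow> Lc (fa_mult (fa_word u) g) = chiw u * Lc (g::'k::comm_ring_1 fa)"
proof (induction rule: fa_induct)
  case zero thus ?case by simp
next
  case (step h c v)
  thus ?case by (simp add: fa_alg Lc_add Lc_smult chiw_append algebra_simps)
qed

lemma Lc_mult: "f \<in> FA \<Longrightarrow> g \<in> FA \<Longrightarrow> Lc (fa_mult f g) = Lc f * Lc (g::'k::comm_ring_1 fa)"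
proof (induction rule: fa_induct)
  case zero thus ?case by simp
next
  case (step h c v)
  thus ?case by (simp add: fa_alg Lc_add Lc_smult Lc_mult_word algebra_simps)
qed

lemma Lc_coeff:
  fixes f :: "'k::comm_ring_1 fa"
  assumes "f \<in> FA"
  shows "coeff (Lc f) 0 = f []" "coeff (Lc f) 1 = f [False]"
proof -
  have fin: "finite (supp f)" using assms by (simp add: FA_iff)
  have "coeff (Lc f) 0 = (\<Sum>w\<in>supp f. if w = [] then f w else 0)"
    unfolding lin_ext_poly_def coeff_sum
    by (intro sum.cong) (auto simp: chiw_def)
  also have "\<dots> = f []" using fin by simp
  finally show "coeff (Lc f) 0 = f []" .
  have "coeff (Lc f) 1 = (\<Sum>w\<in>supp f. if w = [False] then f w else 0)"
    unfolding lin_ext_poly_def coeff_sum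
  proof (intro sum.cong refl)
    fix w :: "bool list"
    show "coeff (smult (f w) (chiw w)) 1 = (if w = [False] then f w else 0)"
    proof (cases "True \<notin> set w \<and> length w = 1")
      case True
      then obtain c where "w = [c]" by (cases w) auto
      with True have "w = [False]" by auto
      thus ?thesis by (simp add: chiw_def)
    next
      case False
      thus ?thesis by (auto simp: chiw_def)
    qed
  qed
  also have "\<dots> = f [False]" using fin by simp
  finally show "coeff (Lc f) 1 = f [False]" .
qed

lemma y2_dvd_coeff: "[:0, 0, 1:] dvd (p::'k::comm_ring_1 poly) \<Longrightarrow> coeff p 0 = 0 \<and> coeff p 1 = 0"
  by (auto elim!: dvdE simp: coeff_pCons_0 )



context fid begin

lemma w_part_iff: "f \<in> w_part I e \<longleftrightarrow> f \<in> FA \<and> (\<exists>g\<in>FA. cg f (fa_mult g e))"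
  by (simp add: w_part_def cg_def)

lemma w_part_ideal:
  fixes e :: "'k fa"
  assumes e: "e \<in> FA" and c: "\<And>h::'k fa. h \<in> FA \<Longrightarrow> cg (fa_mult e h) (fa_mult h e)"
  shows "fa_zero \<in> w_part I e \<and> (\<forall>f\<in>w_part I e. \<forall>g\<in>w_part I e. fa_add f g \<in> w_part I e)
       \<and> (\<forall>f\<in>w_part I e. \<forall>g\<in>FA. fa_mult g f \<in> w_part I e \<and> fa_mult f g \<in> w_part I e)"
proof (intro conjI ballI)
  show "fa_zero \<in> w_part I e"
    unfolding w_part_iff by (intro conjI FA_zero bexI[of _ fa_zero]) (simp_all add: cg_refl)
next
  fix f g :: "'k fa" assume f: "f \<in> w_part I e" and g: "g \<in> w_part I e"
  obtain f1 where f1: "f1 \<in> FA" "cg f (fa_mult f1 e)" using f by (auto simp: w_part_iff)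
  obtain g1 where g1: "g1 \<in> FA" "cg g (fa_mult g1 e)" using g by (auto simp: w_part_iff)
  have "cg (fa_add f g) (fa_mult (fa_add f1 g1) e)"
    using cg_add[OF f1(2) g1(2)] by (simp add: mult_add_left)
  thus "fa_add f g \<in> w_part I e" using f g f1 g1 by (auto simp: w_part_iff)
next
  fix f h :: "'k fa" assume f: "f \<in> w_part I e" and h: "h \<in> FA"
  obtain f1 where f1: "f1 \<in> FA" "cg f (fa_mult f1 e)" using f by (auto simp: w_part_iff)
  have "cg (fa_mult h f) (fa_mult (fa_mult h f1) e)"
    using cg_mult_left[OF f1(2) h] by (simp add: mult_assoc)
  thus "fa_mult h f \<in> w_part I e" using f h f1 by (auto simp: w_part_iff)
  have "cg (fa_mult f h) (fa_mult (fa_mult f1 e) h)" using cg_mult_right[OF f1(2) h] .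
  also have "fa_mult (fa_mult f1 e) h = fa_mult f1 (fa_mult e h)" by (simp add: mult_assoc)
  also have "cg \<dots> (fa_mult f1 (fa_mult h e))" by (intro cg_mult_left c h f1)
  also have "fa_mult f1 (fa_mult h e) = fa_mult (fa_mult f1 h) e" by (simp add: mult_assoc)
  finally show "fa_mult f h \<in> w_part I e" using f h f1 by (auto simp: w_part_iff)
qed

end

context wh begin

abbreviation "E \<equiv> fa_diff fa_one J"

lemma E_FA[simp]: "E \<in> FA" by simp

lemma E_central: "h \<in> FA \<Longrightarrow> cg (fa_mult E h) (fa_mult h E)"
  by (simp add: mult_diff_left mult_diff_right cg_diff cg_refl J_central)

lemma w1_ideal: "fa_zero \<in> w_part I J \<and> (\<forall>f\<in>w_part I J. \<forall>g\<in>w_part I J. fa_add f g \<in> w_part I J)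
       \<and> (\<forall>f\<in>w_part I J. \<forall>g\<in>FA. fa_mult g f \<in> w_part I J \<and> fa_mult f g \<in> w_part I J)"
  by (rule w_part_ideal) (simp_all add: J_central)

lemma w2_ideal: "fa_zero \<in> w_part I E \<and> (\<forall>f\<in>w_part I E. \<forall>g\<in>w_part I E. fa_add f g \<in> w_part I E)
       \<and> (\<forall>f\<in>w_part I E. \<forall>g\<in>FA. fa_mult g f \<in> w_part I E \<and> fa_mult f g \<in> w_part I E)"
  by (rule w_part_ideal) (simp_all add: E_central del: FA_diff)

lemma w1_absorb: "f \<in> w_part I J \<Longrightarrow> cg f (fa_mult f J)"
proof -
  assume "f \<in> w_part I J"
  then obtain g where g: "g \<in> FA" "cg f (fa_mult g J)" by (auto simp: w_part_iff)
  have "cg (fa_mult f J) (fa_mult (fa_mult g J) J)" by (intro cg_mult_right g) simp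
  also have "fa_mult (fa_mult g J) J = fa_mult g (fa_mult J J)" by (simp add: mult_assoc)
  also have "cg \<dots> (fa_mult g J)" by (intro cg_mult_left JJ g)
  also have "cg \<dots> f" by (rule cg_sym[OF g(2)])
  finally show ?thesis by (rule cg_sym)
qed

lemma EJ: "cg (fa_mult E J) fa_zero"
proof -
  have "cg (fa_diff J (fa_mult J J)) (fa_diff J J)" by (intro cg_diff cg_refl JJ)
  thus ?thesis by (simp add: mult_diff_left)
qed

lemma decomp: "f \<in> FA \<Longrightarrow> \<exists>g\<in>w_part I J. \<exists>h\<in>w_part I E. fa_diff f (fa_add g h) \<in> I"
proof -
  assume f: "f \<in> FA"
  have 1: "fa_mult f J \<in> w_part I J" using f by (auto simp: w_part_iff intro!: bexI[of _ f] cg_refl)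
  have 2: "fa_mult f E \<in> w_part I E" using f by (auto simp: w_part_iff intro!: bexI[of _ f] cg_refl simp del: FA_diff)
  have "fa_mult f E = fa_diff f (fa_mult f J)" by (simp add: mult_diff_right)
  hence "fa_diff f (fa_add (fa_mult f J) (fa_mult f E)) = fa_zero"
    by (simp add: fa_diff_def fa_add_def fa_zero_def)
  thus ?thesis using 1 2 I_zero by metis
qed

lemma inter: "f \<in> w_part I J \<Longrightarrow> f \<in> w_part I E \<Longrightarrow> f \<in> I"
proof -
  assume f1: "f \<in> w_part I J" and f2: "f \<in> w_part I E"
  obtain h where h: "h \<in> FA" "cg f (fa_mult h E)" using f2 by (auto simp: w_part_iff)
  have "cg f (fa_mult f J)" by (rule w1_absorb[OF f1])
  also have "cg (fa_mult f J) (fa_mult (fa_mult h E) J)" by (intro cg_mult_right h) simp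
  also have "fa_mult (fa_mult h E) J = fa_mult h (fa_mult E J)" by (simp add: mult_assoc)
  also have "cg \<dots> (fa_mult h fa_zero)" by (intro cg_mult_left EJ h)
  finally show "f \<in> I" by (simp add: cg_zero_iff)
qed

end



context wh begin

lemma H_rels_words: "H_rels n q =
  {fa_diff J fa_one,
   fa_diff (fa_word [True, False]) (fa_smult q (fa_word [False, True])),
   fa_word [False, False]}"
  unfolding H_rels_def Jg_def unfolding Zg_word Xg_word by simp

sublocale H: fid "H_rels n q" by unfold_locales (simp add: H_rels_words Jg_word)

lemma J1_H: "fa_diff J fa_one \<in> H.I" by (rule H.I_gen) (simp add: H_rels_words)

lemma I_sub_H: "x \<in> I \<Longrightarrow> x \<in> H.I"
proof (induction rule: fa_ideal.induct)
  case zero show ?case by (rule H.I_zero)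
next
  case (gen r u v)
  have "r \<in> H.I"
  proof -
    have r1: "fa_diff (fa_word (replicate (2*n+1) True)) (fa_word [True]) \<in> H.I"
    proof -
      have "fa_mult (fa_word [True]) (fa_diff J fa_one) \<in> H.I" by (intro H.I_mult_left J1_H) simp
      thus ?thesis by (simp add: fa_alg Jg_word one_word)
    qed
    have m: "\<And>x. x \<in> H_rels n q \<Longrightarrow> x \<in> H.I" by (rule H.I_gen)
    have m2: "fa_diff (fa_word [True, False]) (fa_smult q (fa_word [False, True])) \<in> H.I"
      "fa_word [False, False] \<in> H.I" by (intro m, simp add: H_rels_words)+
    show ?thesis using gen(1) r1 m2 by (auto simp: wH_rels_words)
  qed
  thus ?case using gen by (intro H.I_mult_right H.I_mult_left)
next
  case (add f g) thus ?case by (blast intro: H.I_add)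
qed

lemma HJ: "x \<in> H.I \<Longrightarrow> fa_mult x J \<in> I"
proof (induction rule: fa_ideal.induct)
  case zero show ?case by (simp add: I_zero)
next
  case (gen r u v)
  have rJ: "fa_mult r J \<in> I"
  proof (cases "r = fa_diff J fa_one")
    case True
    have "cg (fa_mult J J) J" by (rule JJ)
    thus ?thesis using True by (simp add: mult_diff_left cg_def)
  next
    case False
    hence "r \<in> wH_rels n q" using gen(1) by (auto simp: H_rels_words wH_rels_words)
    thus ?thesis by (intro I_mult_right I_gen) auto
  qed
  have r: "r \<in> FA" using gen(1) H.R by auto
  have e1: "fa_mult (fa_mult (fa_mult u r) v) J = fa_mult (fa_mult u r) (fa_mult v J)" by (simp add: mult_assoc)
  have c: "cg (fa_mult (fa_mult u r) (fa_mult v J)) (fa_mult (fa_mult u r) (fa_mult J v))"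
    by (intro cg_mult_left cg_sym[OF J_central] gen r FA_mult)
  have e2: "fa_mult (fa_mult u r) (fa_mult J v) = fa_mult (fa_mult u (fa_mult r J)) v"
    by (simp add: mult_assoc)
  have m: "fa_mult (fa_mult u (fa_mult r J)) v \<in> I" using rJ gen by (intro I_mult_right[OF I_mult_left[OF rJ]]) auto
  have "cg (fa_mult (fa_mult (fa_mult u r) v) J) (fa_mult (fa_mult u (fa_mult r J)) v)"
    using c unfolding e1 e2 .
  thus ?case using m by (rule cg_I)
next
  case (add f g) thus ?case by (simp add: mult_add_left I_add)
qed

lemma psi_inj: "f \<in> w_part I J \<Longrightarrow> f \<in> H.I \<Longrightarrow> f \<in> I"
  using w1_absorb HJ cg_I by blast

lemma psi_surj: "h \<in> FA \<Longrightarrow> \<exists>f\<in>w_part I J. fa_diff (lin_ext fa_word f) h \<in> H.I"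
proof -
  assume h: "h \<in> FA"
  have 1: "fa_mult h J \<in> w_part I J" using h by (auto simp: w_part_iff intro!: bexI[of _ h] cg_refl)
  have "fa_mult h (fa_diff J fa_one) \<in> H.I" by (intro H.I_mult_left J1_H h)
  hence "fa_diff (lin_ext fa_word (fa_mult h J)) h \<in> H.I" using h by (simp add: lin_ext_word mult_diff_right)
  thus ?thesis using 1 by blast
qed

lemma antipode_ok: "f \<in> FA \<Longrightarrow>
  fa_diff (lin_ext fa_word (antipode_w1 n f)) (antipode_H n (lin_ext fa_word f)) \<in> H.I"
proof -
  assume f: "f \<in> FA"
  let ?g1 = "\<lambda>c. if c then fa_pow Zg (2*n-1) else fa_smult (-1) (fa_mult (fa_mult (fa_pow Zg n) Xg) (Jg n))"
  let ?g2 = "\<lambda>c. if c then fa_pow Zg (2*n-1) else fa_smult (-1) (fa_mult (fa_pow Zg n) Xg)"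
  have g1: "\<And>c. ?g1 c \<in> FA" and g2: "\<And>c. ?g2 c \<in> FA" by (auto simp: pow_Zg Xg_word Jg_word)
  have "antipode_w1 n f \<in> FA" unfolding antipode_w1_def
    by (intro lin_ext_FA f hom_word_FA g1) (simp add: Jg_word)
  hence e: "lin_ext fa_word (antipode_w1 n f) = antipode_w1 n f" by (rule lin_ext_word)
  have gc: "H.cg (?g1 c) (?g2 c)" for c
  proof (cases c)
    case True thus ?thesis by (simp add: H.cg_refl)
  next
    case False
    have "H.cg (fa_mult (fa_mult (fa_pow Zg n) Xg) J) (fa_mult (fa_mult (fa_pow Zg n) Xg) fa_one)"
      by (intro H.cg_mult_left) (simp_all add: H.cg_def J1_H pow_Zg Xg_word)
    thus ?thesis using False by (simp add: H.cg_smult)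
  qed
  have "fa_diff (antipode_w1 n f) (antipode_H n f) \<in> H.I"
    unfolding antipode_w1_def antipode_H_def lin_ext_diff
  proof (rule H.I_sum)
    show "finite (supp f)" using f by (simp add: FA_iff)
    fix w
    have "H.cg (hom_word fa_mult J ?g1 (rev w)) (hom_word fa_mult fa_one ?g2 (rev w))"
      by (rule H.hom_word_cg[OF _ gc _ g1 g2]) (simp_all add: H.cg_def J1_H)
    thus "fa_diff (hom_word fa_mult J ?g1 (rev w)) (hom_word fa_mult fa_one ?g2 (rev w)) \<in> H.I"
      by (simp add: H.cg_def)
  qed
  thus ?thesis using e f by (simp add: lin_ext_word)
qed

lemma Lc_I: "x \<in> I \<Longrightarrow> [:0, 0, 1:] dvd Lc x"
proof (induction rule: fa_ideal.induct)
  case zero show ?case by simp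
next
  case (gen r u v)
  have r: "r \<in> FA" using gen(1) R by auto
  have "[:0, 0, 1:] dvd Lc r" using gen(1)
    by (auto simp: wH_rels_words Lc_diff Lc_smult chiw_def monom_Suc monom_0)
  thus ?case using gen r by (simp add: Lc_mult)
next
  case (add f g) thus ?case by (simp add: Lc_add I_FA)
qed

lemma Lc_J: "Lc J = 0" using n1 by (simp add: Jg_word chiw_def)
lemma Lc_E: "Lc E = 1" by (simp add: Lc_diff Lc_J one_word chiw_def)

lemma w1_coeff: "f \<in> w_part I J \<Longrightarrow> f [] = 0 \<and> f [False] = 0"
proof -
  assume "f \<in> w_part I J"
  then obtain g where f: "f \<in> FA" and g: "g \<in> FA" "cg f (fa_mult g J)" by (auto simp: w_part_iff)
  have "[:0, 0, 1:] dvd Lc (fa_diff f (fa_mult g J))" using g(2) Lc_I by (simp add: cg_def)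
  hence "[:0, 0, 1:] dvd Lc f" using f g by (simp add: Lc_diff Lc_mult Lc_J)
  thus ?thesis using Lc_coeff[OF f] y2_dvd_coeff by metis
qed

lemma w2_inj: "f \<in> w_part I E \<Longrightarrow> [:0, 0, 1:] dvd Lc f \<Longrightarrow> f \<in> I"
proof -
  assume fw: "f \<in> w_part I E" and d: "[:0, 0, 1:] dvd Lc f"
  then obtain g where f: "f \<in> FA" and g: "g \<in> FA" "cg f (fa_mult g E)" by (auto simp: w_part_iff)
  have "[:0, 0, 1:] dvd Lc (fa_diff f (fa_mult g E))" using g(2) Lc_I by (simp add: cg_def)
  hence "[:0, 0, 1:] dvd Lc f - Lc g" using f g by (simp add: Lc_diff Lc_mult Lc_E del: FA_diff)
  from dvd_diff[OF d this] have "[:0, 0, 1:] dvd Lc g" by simp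
  hence g0: "g [] = 0" "g [False] = 0" using Lc_coeff[OF g(1)] y2_dvd_coeff by metis+
  have word: "fa_mult (fa_word u) E \<in> I" if u1: "u \<noteq> []" and u2: "u \<noteq> [False]" for u
  proof (cases "True \<in> set u")
    case True
    have "fa_mult (fa_word u) E = fa_diff (fa_word u) (fa_word (u @ replicate (2*n) True))"
      by (simp add: mult_diff_right one_word Jg_word)
    thus ?thesis using absorb[OF True] by (simp add: cg_def)
  next
    case False
    then obtain u' where "u = False # False # u'" using u1 u2
      by (cases u rule: remdups_adj.cases) auto
    hence "fa_word u \<in> I" using rXX_ctx[of "[]" u'] by simp
    thus ?thesis by (intro I_mult_right) (simp_all del: FA_diff)
  qed
  have "fa_mult g E \<in> I" using g(1)
  proof (induction rule: fa_induct)
    case zero show ?case by (simp add: I_zero)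
  next
    case (step h c u)
    hence "u \<noteq> []" "u \<noteq> [False]" using g0 by auto
    thus ?case using step word by (simp add: mult_add_left mult_smult_left I_add I_smult del: FA_diff)
  qed
  thus "f \<in> I" using g(2) cg_I by blast
qed

lemma w2_surj: "\<exists>f\<in>w_part I E. [:0, 0, 1:] dvd (Lc f - p)"
proof -
  obtain c0 c1 r where p: "p = pCons c0 (pCons c1 r)" by (metis pCons_cases)
  let ?g = "fa_add (fa_smult c0 (fa_word [])) (fa_smult c1 (fa_word [False]))"
  have gF: "?g \<in> FA" by simp
  have 1: "fa_mult ?g E \<in> w_part I E" using gF by (auto simp: w_part_iff intro!: bexI[of _ ?g] cg_refl simp del: FA_diff)
  have "Lc (fa_mult ?g E) = [:c0, c1:]"
    using gF by (simp add: Lc_mult Lc_E Lc_add Lc_smult chiw_def monom_Suc monom_0 del: FA_diff FA_add)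
  hence "Lc (fa_mult ?g E) - p = [:0, 0, 1:] * (- r)" by (simp add: p)
  thus ?thesis using 1 by (metis dvd_triv_left)
qed

end



section \<open>Tensor square\<close>

definition FA2 :: "'k::zero fa2 set" where "FA2 = {t. finite (supp t)}"

lemma FA2_iff: "t \<in> FA2 \<longleftrightarrow> finite (supp t)" by (simp add: FA2_def)

lemma FA2_zero[simp]: "(fa2_zero :: 'k::comm_ring_1 fa2) \<in> FA2"
  by (simp add: FA2_iff fa2_zero_def)
lemma FA2_one[simp]: "(fa2_one :: 'k::comm_ring_1 fa2) \<in> FA2"
  unfolding FA2_iff fa2_one_def by (rule finite_subset[of _ "{([],[])}"]) auto
lemma FA2_add[simp]: "s \<in> FA2 \<Longrightarrow> t \<in> FA2 \<Longrightarrow> fa2_add s t \<in> (FA2 :: 'k::comm_ring_1 fa2 set)"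
  unfolding FA2_iff fa2_add_def by (rule finite_subset[of _ "supp s \<union> supp t"]) auto
lemma FA2_smult[simp]: "s \<in> FA2 \<Longrightarrow> fa2_smult c s \<in> (FA2 :: 'k::comm_ring_1 fa2 set)"
  unfolding FA2_iff fa2_smult_def by (rule finite_subset[of _ "supp s"]) auto
lemma FA2_ftens[simp]: "f \<in> FA \<Longrightarrow> g \<in> FA \<Longrightarrow> ftens f g \<in> (FA2 :: 'k::comm_ring_1 fa2 set)"
  unfolding FA2_iff FA_iff ftens_def by (rule finite_subset[of _ "supp f \<times> supp g"]) auto

lemma fa2_mult_nz:
  fixes s t :: "'k::comm_ring_1 fa2"
  assumes "fa2_mult s t (u, v) \<noteq> 0"
  shows "\<exists>i j. s (take i u, take j v) \<noteq> 0 \<and> t (drop i u, drop j v) \<noteq> 0"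
proof -
  from assms obtain i where "(\<Sum>j\<le>length v. s (take i u, take j v) * t (drop i u, drop j v)) \<noteq> 0"
    unfolding fa2_mult_def by (auto elim: sum.not_neutral_contains_not_neutral)
  then obtain j where "s (take i u, take j v) * t (drop i u, drop j v) \<noteq> 0"
    by (auto elim: sum.not_neutral_contains_not_neutral)
  thus ?thesis by (metis mult_not_zero)
qed

lemma FA2_mult[simp]:
  fixes s t :: "'k::comm_ring_1 fa2"
  assumes "s \<in> FA2" "t \<in> FA2" shows "fa2_mult s t \<in> FA2"
proof -
  have S: "supp (fa2_mult s t) \<subseteq> (\<lambda>((a,b),(c,d)). (a @ c, b @ d)) ` (supp s \<times> supp t)"
  proof
    fix p assume "p \<in> supp (fa2_mult s t)"
    moreover obtain u v where p: "p = (u, v)" by (cases p)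
    ultimately obtain i j where "s (take i u, take j v) \<noteq> 0" "t (drop i u, drop j v) \<noteq> 0"
      using fa2_mult_nz by blast
    thus "p \<in> (\<lambda>((a,b),(c,d)). (a @ c, b @ d)) ` (supp s \<times> supp t)"
      unfolding p by (intro image_eqI[of _ _ "((take i u, take j v), (drop i u, drop j v))"]) auto
  qed
  thus ?thesis using assms unfolding FA2_iff
    by (intro finite_subset[OF S] finite_imageI finite_cartesian_product)
qed

definition PT :: "'k::zero fa2 \<Rightarrow> bool" where
  "PT t \<longleftrightarrow> (\<forall>u v. t (u, v) \<noteq> 0 \<longrightarrow> True \<in> set u \<and> True \<in> set v)"

lemma PT_mult_left: "PT s \<Longrightarrow> PT (fa2_mult s (t::'k::comm_ring_1 fa2))"
  unfolding PT_def
proof (intro allI impI)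
  fix u v assume "\<forall>u v. s (u, v) \<noteq> 0 \<longrightarrow> True \<in> set u \<and> True \<in> set v" "fa2_mult s t (u, v) \<noteq> 0"
  then obtain i j where "True \<in> set (take i u)" "True \<in> set (take j v)" using fa2_mult_nz by blast
  thus "True \<in> set u \<and> True \<in> set v" by (meson in_set_takeD)
qed

lemma PT_mult_right: "PT t \<Longrightarrow> PT (fa2_mult s (t::'k::comm_ring_1 fa2))"
  unfolding PT_def
proof (intro allI impI)
  fix u v assume "\<forall>u v. t (u, v) \<noteq> 0 \<longrightarrow> True \<in> set u \<and> True \<in> set v" "fa2_mult s t (u, v) \<noteq> 0"
  then obtain i j where "True \<in> set (drop i u)" "True \<in> set (drop j v)" using fa2_mult_nz by blast
  thus "True \<in> set u \<and> True \<in> set v" by (meson in_set_dropD)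
qed

lemma ftens_mult: "fa2_mult (ftens a b) (ftens c d) = ftens (fa_mult a c) (fa_mult b (d::'k::comm_ring_1 fa))"
  by (auto simp: fa2_mult_def ftens_def fa_mult_def sum_product mult_ac intro!: sum.cong)

lemma fa2_mult_add_left: "fa2_mult (fa2_add s t) r = fa2_add (fa2_mult s r) (fa2_mult t (r::'k::comm_ring_1 fa2))"
  by (auto simp: fa2_mult_def fa2_add_def distrib_right sum.distrib)
lemma fa2_mult_add_right: "fa2_mult r (fa2_add s t) = fa2_add (fa2_mult r s) (fa2_mult r (t::'k::comm_ring_1 fa2))"
  by (auto simp: fa2_mult_def fa2_add_def distrib_left sum.distrib)
lemma fa2_mult_zero_right[simp]: "fa2_mult r fa2_zero = (fa2_zero::'k::comm_ring_1 fa2)"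
  by (auto simp: fa2_mult_def fa2_zero_def)

lemma ftens_add_left: "ftens (fa_add f g) h = fa2_add (ftens f h) (ftens g (h::'k::comm_ring_1 fa))"
  by (auto simp: ftens_def fa2_add_def fa_add_def distrib_right)

lemma fa2_induct[consumes 1, case_names zero step]:
  fixes t :: "'k::comm_ring_1 fa2"
  assumes t: "t \<in> FA2" and z: "P fa2_zero"
    and st: "\<And>h c u v. P h \<Longrightarrow> P (fa2_add h (ftens (fa_smult c (fa_word u)) (fa_word v)))"
  shows "P t"
proof -
  have fin: "finite (supp t)" using t by (simp add: FA2_iff)
  have "P (\<lambda>p. if p \<in> F then t p else 0)" if "finite F" for F
    using that
  proof (induction rule: finite_induct)
    case empty
    have "(\<lambda>p. if p \<in> {} then t p else 0) = fa2_zero" by (simp add: fa2_zero_def)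
    thus ?case using z by simp
  next
    case (insert p F)
    obtain u v where p: "p = (u, v)" by (cases p)
    have "(\<lambda>x. if x \<in> insert p F then t x else 0) =
          fa2_add (\<lambda>x. if x \<in> F then t x else 0) (ftens (fa_smult (t p) (fa_word u)) (fa_word v))"
      using insert(2) by (auto simp: fa2_add_def ftens_def fa_smult_def fa_word_def p)
    thus ?case using st[OF insert(3)] by simp
  qed
  from this[OF fin] have "P (\<lambda>p. if p \<in> supp t then t p else 0)" by simp
  moreover have "(\<lambda>p. if p \<in> supp t then t p else 0) = t" by auto
  ultimately show ?thesis by simp
qed

lemma sum_tens_apply: "sum_tens ps x = (\<Sum>p\<leftarrow>ps. ftens (fst p) (snd p) x)"
  by (induction ps) (auto simp: sum_tens_def fa2_add_def fa2_zero_def)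

lemma tens_map_word: "t \<in> FA2 \<Longrightarrow> tens_map fa_word t = (t :: 'k::comm_ring_1 fa2)"
proof
  fix p :: "bool list \<times> bool list"
  assume t: "t \<in> FA2"
  obtain x y where p: "p = (x, y)" by (cases p)
  have "tens_map fa_word t (x, y) = (\<Sum>uv\<in>supp t. if uv = (x, y) then t uv else 0)"
    unfolding tens_map_def
  proof (intro sum.cong refl)
    fix uv :: "bool list \<times> bool list"
    obtain a b where uv: "uv = (a, b)" by (cases uv)
    show "t uv * ftens (fa_word (fst uv)) (fa_word (snd uv)) (x, y) = (if uv = (x, y) then t uv else 0)"
      unfolding uv by (auto simp: ftens_def fa_word_def)
  qed
  also have "\<dots> = t (x, y)" using t by (simp add: FA2_iff)
  finally show "tens_map fa_word t p = t p" by (simp add: p)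
qed

context fid begin

lemma tens_smult: "x \<in> tens_ideal I \<Longrightarrow> fa2_smult c x \<in> tens_ideal I"
proof (induction rule: tens_ideal.induct)
  case zero thus ?case by (simp add: fa2_smult_def fa2_zero_def tens_ideal.zero[unfolded fa2_zero_def])
next
  case (left r g)
  have "fa2_smult c (ftens r g) = ftens (fa_smult c r) g"
    by (auto simp: fa2_smult_def ftens_def fa_smult_def mult.assoc)
  thus ?case using left by (simp add: tens_ideal.left I_smult)
next
  case (right r g)
  have "fa2_smult c (ftens g r) = ftens (fa_smult c g) r"
    by (auto simp: fa2_smult_def ftens_def fa_smult_def mult.assoc)
  thus ?case using right by (simp add: tens_ideal.right I_FA)
next
  case (add s t)
  have "fa2_smult c (fa2_add s t) = fa2_add (fa2_smult c s) (fa2_smult c t)"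
    by (auto simp: fa2_smult_def fa2_add_def distrib_left)
  thus ?case using add by (simp add: tens_ideal.add)
qed

lemma tens_sum: "finite S \<Longrightarrow> (\<And>w. w \<in> S \<Longrightarrow> \<phi> w \<in> tens_ideal I) \<Longrightarrow>
  (\<lambda>b. \<Sum>w\<in>S. c w * \<phi> w b) \<in> tens_ideal I"
proof (induction rule: finite_induct)
  case empty
  have "(\<lambda>b. \<Sum>w\<in>{}. c w * \<phi> w b) = fa2_zero" by (simp add: fa2_zero_def)
  thus ?case by (simp add: tens_ideal.zero)
next
  case (insert a F)
  have "(\<lambda>b. \<Sum>w\<in>insert a F. c w * \<phi> w b) =
        fa2_add (fa2_smult (c a) (\<phi> a)) (\<lambda>b. \<Sum>w\<in>F. c w * \<phi> w b)"
    using insert by (simp add: fa2_add_def fa2_smult_def)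
  thus ?case using insert by (simp add: tens_ideal.add tens_smult)
qed

end



context wh begin

abbreviation "DD a w \<equiv> hom_word fa2_mult fa2_one (comult_gen n q a) w"

lemma comult_gen_words:
  "comult_gen n q a True = fa2_add (ftens (fa_word [True]) (fa_word [True]))
      (fa2_smult (a * (1 - inverse (q^2))) (ftens (fa_word (replicate (n+1) True @ [False])) (fa_word [True, False])))"
  "comult_gen n q a False = fa2_add (ftens (fa_word [False]) (fa_word []))
      (ftens (fa_word (replicate n True)) (fa_word [False]))"
  unfolding comult_gen_def pow_Zg by (simp_all add: Zg_word Xg_word one_word)

lemma comult_gen_FA2[simp]: "comult_gen n q a c \<in> FA2"
  by (cases c) (simp_all add: comult_gen_words)

lemma DD_FA2[simp]: "DD a w \<in> FA2"
  by (induction w) simp_all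

lemma PT_gen: "PT (comult_gen n q a True)"
  unfolding PT_def comult_gen_words fa2_add_def fa2_smult_def ftens_def fa_word_def by auto

lemma DD_PT: "True \<in> set w \<Longrightarrow> PT (DD a w)"
proof (induction w)
  case Nil thus ?case by simp
next
  case (Cons c w)
  show ?case
  proof (cases c)
    case True thus ?thesis using PT_gen by (simp add: PT_mult_left)
  next
    case False thus ?thesis using Cons by (simp add: PT_mult_right)
  qed
qed

lemma I_add_neg: "cg x (fa_smult (-1) y) \<Longrightarrow> fa_add x y \<in> I"
proof -
  assume "cg x (fa_smult (-1) y)"
  moreover have "fa_diff x (fa_smult (-1) y) = fa_add x y" by (simp add: fa_diff_def fa_smult_def fa_add_def)
  ultimately show ?thesis by (simp add: cg_def)
qed

lemma DX_cancel: "t \<in> FA2 \<Longrightarrow> fa2_mult (comult_gen n q a False) (fa2_mult (comult_gen n q a False) t) \<in> tens_ideal I"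
proof (induction rule: fa2_induct)
  case zero thus ?case by (simp add: tens_ideal.zero)
next
  case (step h c u v)
  let ?X = "fa_word [False] :: 'k fa"
  let ?Zn = "fa_word (replicate n True) :: 'k fa"
  let ?a = "fa_smult c (fa_word u)" and ?b = "fa_word v :: 'k fa"
  have A: "fa_mult ?X (fa_mult ?X ?a) \<in> I"
    using I_smult[OF rXX_ctx[of "[]" u], of c] by (simp add: fa_alg)
  have B: "fa_mult ?X (fa_mult ?X ?b) \<in> I"
    using rXX_ctx[of "[]" v] by (simp add: fa_alg)
  have C: "fa_add (fa_mult ?Zn (fa_mult ?X ?a)) (fa_mult ?X (fa_mult ?Zn ?a)) \<in> I"
  proof -
    have "cg (fa_word (replicate n True @ [False] @ u)) (fa_smult (q^n) (fa_word (False # replicate n True @ u)))"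
      using cg_ctx[OF com[of n], of "[]" u] by simp
    hence "cg (fa_smult c (fa_word (replicate n True @ [False] @ u)))
              (fa_smult (-1) (fa_smult c (fa_word (False # replicate n True @ u))))"
      using cg_smult by (fastforce simp: qn mult.commute)
    thus ?thesis by (intro I_add_neg) (simp add: fa_alg)
  qed
  have e: "fa2_mult (comult_gen n q a False) (fa2_mult (comult_gen n q a False) (ftens ?a ?b)) =
    fa2_add (fa2_add (ftens (fa_mult ?X (fa_mult ?X ?a)) ?b)
                     (ftens (fa_add (fa_mult ?Zn (fa_mult ?X ?a)) (fa_mult ?X (fa_mult ?Zn ?a))) (fa_mult ?X ?b)))
            (ftens (fa_mult ?Zn (fa_mult ?Zn ?a)) (fa_mult ?X (fa_mult ?X ?b)))"
    unfolding comult_gen_words fa2_mult_add_left fa2_mult_add_right ftens_mult ftens_add_left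
    by (auto simp: fa2_add_def one_word[symmetric])
  have "fa2_mult (comult_gen n q a False) (fa2_mult (comult_gen n q a False) (ftens ?a ?b)) \<in> tens_ideal I"
    unfolding e using A B C
    by (intro tens_ideal.add tens_ideal.left tens_ideal.right) simp_all
  thus ?case using step by (simp add: fa2_mult_add_right tens_ideal.add)
qed

end



lemma FA2_sum: "(\<And>w. \<phi> w \<in> FA2) \<Longrightarrow> (\<lambda>b. \<Sum>w\<in>S. c w * \<phi> w b) \<in> (FA2 :: 'k::comm_ring_1 fa2 set)"
proof (induction S rule: infinite_finite_induct)
  case (infinite S)
  thus ?case by (simp add: FA2_iff)
next
  case empty
  thus ?case by (simp add: FA2_iff)
next
  case (insert a F)
  have "(\<lambda>b. \<Sum>w\<in>insert a F. c w * \<phi> w b) =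
        fa2_add (fa2_smult (c a) (\<phi> a)) (\<lambda>b. \<Sum>w\<in>F. c w * \<phi> w b)"
    using insert by (simp add: fa2_add_def fa2_smult_def)
  thus ?case using insert by simp
qed

context wh begin

lemma comult_eq: "comult n q a f = (\<lambda>b. \<Sum>w\<in>supp f. f w * DD a w b)"
  by (simp add: comult_def lin_ext_def)

lemma comult_FA2: "comult n q a f \<in> FA2"
  unfolding comult_eq by (rule FA2_sum) simp

lemma w1_word: "True \<in> set u \<Longrightarrow> fa_smult c (fa_word u) \<in> w_part I J"
proof -
  assume u: "True \<in> set u"
  have "cg (fa_smult c (fa_word u)) (fa_smult c (fa_word (u @ replicate (2*n) True)))"
    by (rule cg_smult[OF absorb[OF u]])
  hence "cg (fa_smult c (fa_word u)) (fa_mult (fa_smult c (fa_word u)) J)"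
    by (simp add: fa_alg Jg_word)
  thus ?thesis by (auto simp: w_part_iff)
qed

lemma comult_w1:
  assumes fw: "f \<in> w_part I J"
  shows "\<exists>ps. set ps \<subseteq> w_part I J \<times> w_part I J \<and>
            fa2_diff (comult n q a f) (sum_tens ps) \<in> tens_ideal I"
proof -
  have f: "f \<in> FA" using fw by (simp add: w_part_iff)
  have f0: "f [] = 0" "f [False] = 0" using w1_coeff[OF fw] by auto
  let ?S = "supp f"
  have fin: "finite ?S" using f by (simp add: FA_iff)
  let ?ST = "{w\<in>?S. True \<in> set w}" and ?SF = "{w\<in>?S. True \<notin> set w}"
  define G where "G = (\<lambda>b. \<Sum>w\<in>?ST. f w * DD a w b)"
  define Hh where "Hh = (\<lambda>b. \<Sum>w\<in>?SF. f w * DD a w b)"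
  have split: "comult n q a f = fa2_add G Hh"
  proof -
    have "?S = ?ST \<union> ?SF" by auto
    hence "(\<Sum>w\<in>?S. f w * DD a w b) = (\<Sum>w\<in>?ST. f w * DD a w b) + (\<Sum>w\<in>?SF. f w * DD a w b)" for b
    proof -
      assume U: "?S = ?ST \<union> ?SF"
      have "(\<Sum>w\<in>?S. f w * DD a w b) = (\<Sum>w\<in>?ST \<union> ?SF. f w * DD a w b)"
        using arg_cong[OF U, of "\<lambda>A. \<Sum>w\<in>A. f w * DD a w b"] .
      also have "\<dots> = (\<Sum>w\<in>?ST. f w * DD a w b) + (\<Sum>w\<in>?SF. f w * DD a w b)"
        by (rule sum.union_disjoint) (use fin in auto)
      finally show ?thesis .
    qed
    thus ?thesis unfolding comult_eq G_def Hh_def fa2_add_def by simp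
  qed
  have Hh: "Hh \<in> tens_ideal I"
    unfolding Hh_def
  proof (rule tens_sum)
    show "finite ?SF" using fin by simp
    fix w assume w: "w \<in> ?SF"
    hence "w \<noteq> []" "w \<noteq> [False]" "True \<notin> set w" using f0 by auto
    then obtain w' where "w = False # False # w'" by (cases w rule: remdups_adj.cases) auto
    thus "DD a w \<in> tens_ideal I" using DX_cancel[of "DD a w'" a] by simp
  qed
  have GF: "G \<in> FA2" unfolding G_def by (rule FA2_sum) simp
  have GP: "PT G" unfolding PT_def
  proof (intro allI impI)
    fix u v assume "G (u, v) \<noteq> 0"
    then obtain w where "w \<in> ?ST" "f w * DD a w (u, v) \<noteq> 0" unfolding G_def
      by (auto elim: sum.not_neutral_contains_not_neutral)
    hence "True \<in> set w" "DD a w (u, v) \<noteq> 0" by auto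
    thus "True \<in> set u \<and> True \<in> set v" using DD_PT[of w a] unfolding PT_def by blast
  qed
  obtain L where L: "set L = supp G" "distinct L"
    using finite_distinct_list GF by (auto simp: FA2_iff)
  define ps where "ps = map (\<lambda>p. (fa_smult (G p) (fa_word (fst p)), fa_word (snd p) :: 'k fa)) L"
  have st: "sum_tens ps = G"
  proof
    fix x :: "bool list \<times> bool list"
    obtain x1 x2 where x: "x = (x1, x2)" by (cases x)
    have "sum_tens ps x = (\<Sum>p\<in>supp G. ftens (fa_smult (G p) (fa_word (fst p))) (fa_word (snd p)) x)"
      unfolding sum_tens_apply ps_def using L
      by (simp add: comp_def sum_list_distinct_conv_sum_set)
    also have "\<dots> = (\<Sum>p\<in>supp G. if p = x then G p else 0)"
      by (intro sum.cong refl) (auto simp: x ftens_def fa_smult_def fa_word_def)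
    also have "\<dots> = G x" using GF by (simp add: FA2_iff)
    finally show "sum_tens ps x = G x" .
  qed
  have sub: "set ps \<subseteq> w_part I J \<times> w_part I J"
  proof
    fix z assume "z \<in> set ps"
    then obtain p where p: "p \<in> supp G" "z = (fa_smult (G p) (fa_word (fst p)), fa_word (snd p))"
      using L unfolding ps_def by auto
    obtain u v where pv: "p = (u, v)" by (cases p)
    have "True \<in> set u" "True \<in> set v" using GP p(1) pv unfolding PT_def by auto
    thus "z \<in> w_part I J \<times> w_part I J" using w1_word[of v 1] w1_word[of u] p pv by simp
  qed
  have "fa2_diff (comult n q a f) (sum_tens ps) = Hh"
    unfolding split st by (simp add: fa2_diff_def fa2_add_def)
  thus ?thesis using sub Hh by auto
qed

end

context wh begin

lemma main_wh:
  shows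
    "(fa_zero \<in> (w_part I J) \<and> (\<forall>f\<in>(w_part I J). \<forall>g\<in>(w_part I J). fa_add f g \<in> (w_part I J))
       \<and> (\<forall>f\<in>(w_part I J). \<forall>g\<in>FA. fa_mult g f \<in> (w_part I J) \<and> fa_mult f g \<in> (w_part I J)))
     \<and> (fa_zero \<in> (w_part I E) \<and> (\<forall>f\<in>(w_part I E). \<forall>g\<in>(w_part I E). fa_add f g \<in> (w_part I E))
       \<and> (\<forall>f\<in>(w_part I E). \<forall>g\<in>FA. fa_mult g f \<in> (w_part I E) \<and> fa_mult f g \<in> (w_part I E)))
    \<comment> \<open>wH_{4n} = (w_part I J) \<oplus> (w_part I E)\<close>
     \<and> (\<forall>f\<in>FA. \<exists>g\<in>(w_part I J). \<exists>h\<in>(w_part I E). fa_diff f (fa_add g h) \<in> I)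
     \<and> (\<forall>f. f \<in> (w_part I J) \<and> f \<in> (w_part I E) \<longrightarrow> f \<in> I)
    \<comment> \<open>the restricted comultiplication maps (w_part I J) into (w_part I J) \<otimes> (w_part I J)\<close>
     \<and> (\<forall>f\<in>(w_part I J). \<exists>ps. set ps \<subseteq> (w_part I J) \<times> (w_part I J) \<and>
            fa2_diff (comult n q a f) (sum_tens ps) \<in> tens_ideal I)
    \<comment> \<open>(w_part I J) \<cong> H_{4n} as Hopf algebras\<close>
     \<and> (\<exists>\<psi> :: bool list \<Rightarrow> 'k fa. (\<forall>w. \<psi> w \<in> FA) \<and>
          (\<forall>f\<in>I. lin_ext \<psi> f \<in> H.I) \<and>
          (\<forall>f\<in>(w_part I J). \<forall>g\<in>(w_part I J). fa_diff (lin_ext \<psi> (fa_mult f g))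
                               (fa_mult (lin_ext \<psi> f) (lin_ext \<psi> g)) \<in> H.I) \<and>
          fa_diff (lin_ext \<psi> J) fa_one \<in> H.I \<and>
          (\<forall>f\<in>(w_part I J). lin_ext \<psi> f \<in> H.I \<longrightarrow> f \<in> I) \<and>
          (\<forall>h\<in>FA. \<exists>f\<in>(w_part I J). fa_diff (lin_ext \<psi> f) h \<in> H.I) \<and>
          (\<forall>f\<in>(w_part I J). fa2_diff (tens_map \<psi> (comult n q a f))
                             (comult n q a (lin_ext \<psi> f)) \<in> tens_ideal H.I) \<and>
          (\<forall>f\<in>(w_part I J). counit (lin_ext \<psi> f) = counit f) \<and>
          (\<forall>f\<in>(w_part I J). fa_diff (lin_ext \<psi> (antipode_w1 n f))
                           (antipode_H n (lin_ext \<psi> f)) \<in> H.I))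
    \<comment> \<open>(w_part I E) \<cong> k[y]/(y^2) as algebras\<close>
     \<and> (\<exists>\<chi> :: bool list \<Rightarrow> 'k poly.
          (\<forall>f\<in>I. [:0, 0, 1:] dvd lin_ext_poly \<chi> f) \<and>
          (\<forall>f\<in>(w_part I E). \<forall>g\<in>(w_part I E). [:0, 0, 1:] dvd
               (lin_ext_poly \<chi> (fa_mult f g) - lin_ext_poly \<chi> f * lin_ext_poly \<chi> g)) \<and>
          [:0, 0, 1:] dvd (lin_ext_poly \<chi> (fa_diff fa_one J) - 1) \<and>
          (\<forall>f\<in>(w_part I E). [:0, 0, 1:] dvd lin_ext_poly \<chi> f \<longrightarrow> f \<in> I) \<and>
          (\<forall>p. \<exists>f\<in>(w_part I E). [:0, 0, 1:] dvd (lin_ext_poly \<chi> f - p)))"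
proof -
  have w1FA: "\<And>f. f \<in> w_part I J \<Longrightarrow> f \<in> FA" by (simp add: w_part_iff)
  have w2FA: "\<And>f. f \<in> w_part I E \<Longrightarrow> f \<in> FA" by (simp add: w_part_iff)
  have psi: "(\<forall>w. fa_word w \<in> FA) \<and>
          (\<forall>f\<in>I. lin_ext fa_word f \<in> H.I) \<and>
          (\<forall>f\<in>w_part I J. \<forall>g\<in>w_part I J. fa_diff (lin_ext fa_word (fa_mult f g))
                               (fa_mult (lin_ext fa_word f) (lin_ext fa_word g)) \<in> H.I) \<and>
          fa_diff (lin_ext fa_word J) fa_one \<in> H.I \<and>
          (\<forall>f\<in>w_part I J. lin_ext fa_word f \<in> H.I \<longrightarrow> f \<in> I) \<and>
          (\<forall>h\<in>FA. \<exists>f\<in>w_part I J. fa_diff (lin_ext fa_word f) h \<in> H.I) \<and>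
          (\<forall>f\<in>w_part I J. fa2_diff (tens_map fa_word (comult n q a f))
                             (comult n q a (lin_ext fa_word f)) \<in> tens_ideal H.I) \<and>
          (\<forall>f\<in>w_part I J. counit (lin_ext fa_word f) = counit f) \<and>
          (\<forall>f\<in>w_part I J. fa_diff (lin_ext fa_word (antipode_w1 n f))
                           (antipode_H n (lin_ext fa_word f)) \<in> H.I)"
  proof (intro conjI ballI allI impI)
    show "fa_word w \<in> FA" for w by simp
    show "lin_ext fa_word f \<in> H.I" if "f \<in> I" for f
      using that by (simp add: lin_ext_word I_FA I_sub_H)
    show "fa_diff (lin_ext fa_word (fa_mult f g)) (fa_mult (lin_ext fa_word f) (lin_ext fa_word g)) \<in> H.I"
      if "f \<in> w_part I J" "g \<in> w_part I J" for f g
      using that w1FA by (simp add: lin_ext_word H.I_zero)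
    show "fa_diff (lin_ext fa_word J) fa_one \<in> H.I" by (simp add: lin_ext_word J1_H)
    show "f \<in> I" if "f \<in> w_part I J" "lin_ext fa_word f \<in> H.I" for f
      using that w1FA psi_inj by (simp add: lin_ext_word)
    show "\<exists>f\<in>w_part I J. fa_diff (lin_ext fa_word f) h \<in> H.I" if "h \<in> FA" for h
      using that by (rule psi_surj)
    show "fa2_diff (tens_map fa_word (comult n q a f)) (comult n q a (lin_ext fa_word f)) \<in> tens_ideal H.I"
      if "f \<in> w_part I J" for f
    proof -
      have "fa2_diff (tens_map fa_word (comult n q a f)) (comult n q a (lin_ext fa_word f)) = fa2_zero"
        using that w1FA by (simp add: lin_ext_word tens_map_word comult_FA2 fa2_diff_def fa2_zero_def)
      thus ?thesis by (simp add: tens_ideal.zero)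
    qed
    show "counit (lin_ext fa_word f) = counit f" if "f \<in> w_part I J" for f
      using that w1FA by (simp add: lin_ext_word)
    show "fa_diff (lin_ext fa_word (antipode_w1 n f)) (antipode_H n (lin_ext fa_word f)) \<in> H.I"
      if "f \<in> w_part I J" for f
      using that w1FA by (intro antipode_ok) auto
  qed
  have chi: "(\<forall>f\<in>I. [:0, 0, 1:] dvd Lc f) \<and>
          (\<forall>f\<in>w_part I E. \<forall>g\<in>w_part I E. [:0, 0, 1:] dvd
               (Lc (fa_mult f g) - Lc f * Lc g)) \<and>
          [:0, 0, 1:] dvd (Lc (fa_diff fa_one J) - 1) \<and>
          (\<forall>f\<in>w_part I E. [:0, 0, 1:] dvd Lc f \<longrightarrow> f \<in> I) \<and>
          (\<forall>p. \<exists>f\<in>w_part I E. [:0, 0, 1:] dvd (Lc f - p))"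
    using Lc_I w2FA w2_inj w2_surj by (auto simp: Lc_mult Lc_E)
  show ?thesis
    apply (intro conjI)
    subgoal using w1_ideal by blast
    subgoal using w1_ideal by blast
    subgoal using w1_ideal by blast
    subgoal using w2_ideal by blast
    subgoal using w2_ideal by blast
    subgoal using w2_ideal by blast
    subgoal using decomp by blast
    subgoal using inter by blast
    subgoal using comult_w1 by blast
    subgoal by (rule exI[of _ fa_word], rule psi)
    subgoal by (rule exI[of _ chiw], rule chi)
    done
qed

end

theorem proposition3p2:
  fixes n :: nat and q a :: "'k::field_char_0"
  assumes "alg_closed TYPE('k)"
    and "n \<ge> 1"
    and "primitive_root q (2*n)"
    and "a \<noteq> 0"
  defines "I \<equiv> fa_ideal (wH_rels n q)"
    and "IH \<equiv> fa_ideal (H_rels n q)"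
    and "J \<equiv> Jg n"
    and "w1 \<equiv> w_part (fa_ideal (wH_rels n q)) (Jg n)"
    and "w2 \<equiv> w_part (fa_ideal (wH_rels n q)) (fa_diff fa_one (Jg n))"
  shows
    \<comment> \<open>w1 and w2 are two-sided ideals of wH_{4n}\<close>
    "(fa_zero \<in> w1 \<and> (\<forall>f\<in>w1. \<forall>g\<in>w1. fa_add f g \<in> w1)
       \<and> (\<forall>f\<in>w1. \<forall>g\<in>FA. fa_mult g f \<in> w1 \<and> fa_mult f g \<in> w1))
     \<and> (fa_zero \<in> w2 \<and> (\<forall>f\<in>w2. \<forall>g\<in>w2. fa_add f g \<in> w2)
       \<and> (\<forall>f\<in>w2. \<forall>g\<in>FA. fa_mult g f \<in> w2 \<and> fa_mult f g \<in> w2))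
    \<comment> \<open>wH_{4n} = w1 \<oplus> w2\<close>
     \<and> (\<forall>f\<in>FA. \<exists>g\<in>w1. \<exists>h\<in>w2. fa_diff f (fa_add g h) \<in> I)
     \<and> (\<forall>f. f \<in> w1 \<and> f \<in> w2 \<longrightarrow> f \<in> I)
    \<comment> \<open>the restricted comultiplication maps w1 into w1 \<otimes> w1\<close>
     \<and> (\<forall>f\<in>w1. \<exists>ps. set ps \<subseteq> w1 \<times> w1 \<and>
            fa2_diff (comult n q a f) (sum_tens ps) \<in> tens_ideal I)
    \<comment> \<open>w1 \<cong> H_{4n} as Hopf algebras\<close>
     \<and> (\<exists>\<psi> :: bool list \<Rightarrow> 'k fa. (\<forall>w. \<psi> w \<in> FA) \<and>
          (\<forall>f\<in>I. lin_ext \<psi> f \<in> IH) \<and>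
          (\<forall>f\<in>w1. \<forall>g\<in>w1. fa_diff (lin_ext \<psi> (fa_mult f g))
                               (fa_mult (lin_ext \<psi> f) (lin_ext \<psi> g)) \<in> IH) \<and>
          fa_diff (lin_ext \<psi> J) fa_one \<in> IH \<and>
          (\<forall>f\<in>w1. lin_ext \<psi> f \<in> IH \<longrightarrow> f \<in> I) \<and>
          (\<forall>h\<in>FA. \<exists>f\<in>w1. fa_diff (lin_ext \<psi> f) h \<in> IH) \<and>
          (\<forall>f\<in>w1. fa2_diff (tens_map \<psi> (comult n q a f))
                             (comult n q a (lin_ext \<psi> f)) \<in> tens_ideal IH) \<and>
          (\<forall>f\<in>w1. counit (lin_ext \<psi> f) = counit f) \<and>
          (\<forall>f\<in>w1. fa_diff (lin_ext \<psi> (antipode_w1 n f))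
                           (antipode_H n (lin_ext \<psi> f)) \<in> IH))
    \<comment> \<open>w2 \<cong> k[y]/(y^2) as algebras\<close>
     \<and> (\<exists>\<chi> :: bool list \<Rightarrow> 'k poly.
          (\<forall>f\<in>I. [:0, 0, 1:] dvd lin_ext_poly \<chi> f) \<and>
          (\<forall>f\<in>w2. \<forall>g\<in>w2. [:0, 0, 1:] dvd
               (lin_ext_poly \<chi> (fa_mult f g) - lin_ext_poly \<chi> f * lin_ext_poly \<chi> g)) \<and>
          [:0, 0, 1:] dvd (lin_ext_poly \<chi> (fa_diff fa_one J) - 1) \<and>
          (\<forall>f\<in>w2. [:0, 0, 1:] dvd lin_ext_poly \<chi> f \<longrightarrow> f \<in> I) \<and>
          (\<forall>p. \<exists>f\<in>w2. [:0, 0, 1:] dvd (lin_ext_poly \<chi> f - p)))"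
proof -
  have q2n: "q ^ (2*n) = 1" using assms(3) by (simp add: primitive_root_def)
  have "0 < n \<and> n < 2*n" using assms(2) by simp
  hence qn1: "q ^ n \<noteq> 1" using assms(3) unfolding primitive_root_def by blast
  have "(q^n)^2 = q^(2*n)" by (metis power_mult mult.commute)
  hence "(q^n)^2 = 1" using q2n by simp
  hence qn: "q ^ n = -1" using qn1 by (simp add: power2_eq_1_iff)
  interpret wh n q by (unfold_locales; fact assms(2) q2n qn)
  show ?thesis unfolding I_def IH_def J_def w1_def w2_def by (rule main_wh)
qed

end
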